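(* Let $T:I\to I$ be an interval exchange map with the Keane property, on an alphabet $\mathcal A$ with $d$ letters, and let $i^+,i^-$ and $K$ be as defined in the context. Then there is a unique continuous map $\hat T:K\to K$ such that $\hat T\circ i^+=i^+\circ T$ on $I$. Moreover, $\hat T$ is a minimal homeomorphism of $K$.
   Context: Combinatorial data: bijections $\pi_0,\pi_1:\mathcal A\to\{1,\dots,d\}$, admissible ($\pi_0^{-1}(\{1,\dots,k\})\neq\pi_1^{-1}(\{1,\dots,k\})$ for $1\le k<d$); lengths $\lambda\in(0,\infty)^{\mathcal A}$, $\lambda^*=\sum\lambda_\alpha$, $I=[0,\lambda^* )$, $I_\alpha=[0,\lambda_\alpha)\times\{\alpha\}$, $j_\varepsilon(x,\alpha)=x+\sum_{\pi_\varepsilon(\beta)<\pi_\varepsilon(\alpha)}\lambda_\beta$, $T=j_1\circ j_0^{-1}$. Keane property: no $(\alpha,\beta,m)$ with $\pi_0(\beta)>1$, $m\ge1$, $T^m(j_0(0,\alpha))=j_0(0,\beta)$. For $n\ge0$ let $D_0(n)=\{T^{-n}(j_0(0,\alpha)):\alpha\in\mathcal A,\ \pi_0(\alpha)>1\}$ and $D_1(n)=\{T^{n}(j_1(0,\alpha)):\alpha\in\mathcal A,\ \pi_1(\alpha)>1\}$ (under the Keane property these sets are pairwise disjoint and do not contain $0$). Let $\mu=\sum_{n\ge0}\sum_{y\in D_0(n)\sqcup D_1(n)}2^{-n}\delta_y$, and for $y\in I$ put $i^-(y)=y+\mu([0,y))$, $i^+(y)=y+\mu([0,y])$; also $i^-(\lambda^*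 )=\lambda^*+4(d-1)$. Let $K=i^-(I)\cup i^+(I)\cup\{i^-(\lambda^* )\}\subset\mathbb R$. *)

theory Defs
  imports "HOL-Analysis.Analysis"
begin

definition ie_data :: "'a set \<Rightarrow> ('a \<Rightarrow> nat) \<Rightarrow> ('a \<Rightarrow> nat) \<Rightarrow> ('a \<Rightarrow> real) \<Rightarrow> bool" where
  "ie_data A p0 p1 lam \<longleftrightarrow> finite A \<and> bij_betw p0 A {1..card A} \<and> bij_betw p1 A {1..card A}
      \<and> (\<forall>a\<in>A. lam a > 0)"

definition admissible :: "'a set \<Rightarrow> ('a \<Rightarrow> nat) \<Rightarrow> ('a \<Rightarrow> nat) \<Rightarrow> bool" where
  "admissible A p0 p1 \<longleftrightarrow>
     (\<forall>k. 1 \<le> k \<and> k < card A \<longrightarrow> {a\<in>A. p0 a \<in> {1..k}} \<noteq> {a\<in>A. p1 a \<in> {1..k}})"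

definition lstar :: "'a set \<Rightarrow> ('a \<Rightarrow> real) \<Rightarrow> real" where
  "lstar A lam = (\<Sum>a\<in>A. lam a)"

definition Iint :: "'a set \<Rightarrow> ('a \<Rightarrow> real) \<Rightarrow> real set" where
  "Iint A lam = {0..<lstar A lam}"

definition offs :: "'a set \<Rightarrow> ('a \<Rightarrow> nat) \<Rightarrow> ('a \<Rightarrow> real) \<Rightarrow> 'a \<Rightarrow> real" where
  "offs A p lam a = (\<Sum>b\<in>{b\<in>A. p b < p a}. lam b)"

definition jmap :: "'a set \<Rightarrow> ('a \<Rightarrow> nat) \<Rightarrow> ('a \<Rightarrow> real) \<Rightarrow> real \<times> 'a \<Rightarrow> real" where
  "jmap A p lam = (\<lambda>(x, a). x + offs A p lam a)"

definition Idisj :: "'a set \<Rightarrow> ('a \<Rightarrow> real) \<Rightarrow> (real \<times> 'a) set" where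
  "Idisj A lam = (\<Union>a\<in>A. {0..<lam a} \<times> {a})"

definition iet :: "'a set \<Rightarrow> ('a \<Rightarrow> nat) \<Rightarrow> ('a \<Rightarrow> nat) \<Rightarrow> ('a \<Rightarrow> real) \<Rightarrow> real \<Rightarrow> real" where
  "iet A p0 p1 lam = jmap A p1 lam \<circ> inv_into (Idisj A lam) (jmap A p0 lam)"

definition keane :: "'a set \<Rightarrow> ('a \<Rightarrow> nat) \<Rightarrow> ('a \<Rightarrow> nat) \<Rightarrow> ('a \<Rightarrow> real) \<Rightarrow> bool" where
  "keane A p0 p1 lam \<longleftrightarrow>
     \<not> (\<exists>a\<in>A. \<exists>b\<in>A. \<exists>m::nat. p0 b > 1 \<and> m \<ge> 1 \<and>
          (iet A p0 p1 lam ^^ m) (jmap A p0 lam (0, a)) = jmap A p0 lam (0, b))"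

definition D0 :: "'a set \<Rightarrow> ('a \<Rightarrow> nat) \<Rightarrow> ('a \<Rightarrow> nat) \<Rightarrow> ('a \<Rightarrow> real) \<Rightarrow> nat \<Rightarrow> real set" where
  "D0 A p0 p1 lam n = {(inv_into (Iint A lam) (iet A p0 p1 lam) ^^ n) (jmap A p0 lam (0, a)) | a. a \<in> A \<and> p0 a > 1}"

definition D1 :: "'a set \<Rightarrow> ('a \<Rightarrow> nat) \<Rightarrow> ('a \<Rightarrow> nat) \<Rightarrow> ('a \<Rightarrow> real) \<Rightarrow> nat \<Rightarrow> real set" where
  "D1 A p0 p1 lam n = {(iet A p0 p1 lam ^^ n) (jmap A p1 lam (0, a)) | a. a \<in> A \<and> p1 a > 1}"

definition muS :: "'a set \<Rightarrow> ('a \<Rightarrow> nat) \<Rightarrow> ('a \<Rightarrow> nat) \<Rightarrow> ('a \<Rightarrow> real) \<Rightarrow> real set \<Rightarrow> real" where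
  "muS A p0 p1 lam S = (\<Sum>n. (1/2)^n * (real (card (D0 A p0 p1 lam n \<inter> S)) + real (card (D1 A p0 p1 lam n \<inter> S))))"

definition iminus :: "'a set \<Rightarrow> ('a \<Rightarrow> nat) \<Rightarrow> ('a \<Rightarrow> nat) \<Rightarrow> ('a \<Rightarrow> real) \<Rightarrow> real \<Rightarrow> real" where
  "iminus A p0 p1 lam y =
     (if y = lstar A lam then lstar A lam + 4 * (real (card A) - 1)
      else y + muS A p0 p1 lam {0..<y})"

definition iplus :: "'a set \<Rightarrow> ('a \<Rightarrow> nat) \<Rightarrow> ('a \<Rightarrow> nat) \<Rightarrow> ('a \<Rightarrow> real) \<Rightarrow> real \<Rightarrow> real" where
  "iplus A p0 p1 lam y = y + muS A p0 p1 lam {0..y}"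

definition Kset :: "'a set \<Rightarrow> ('a \<Rightarrow> nat) \<Rightarrow> ('a \<Rightarrow> nat) \<Rightarrow> ('a \<Rightarrow> real) \<Rightarrow> real set" where
  "Kset A p0 p1 lam = iminus A p0 p1 lam ` Iint A lam \<union> iplus A p0 p1 lam ` Iint A lam
      \<union> {iminus A p0 p1 lam (lstar A lam)}"

definition minimal_on :: "real set \<Rightarrow> (real \<Rightarrow> real) \<Rightarrow> bool" where
  "minimal_on K f \<longleftrightarrow> (\<forall>C. C \<subseteq> K \<and> closedin (top_of_set K) C \<and> C \<noteq> {} \<and> f ` C \<subseteq> C \<longrightarrow> C = K)"

end

theory Submission
  imports Defs
begin

lemma pigeon_intervals:
  fixes u :: "nat \<Rightarrow> real" and l L :: real and N :: nat
  assumes lpos: "l > 0" and rng: "\<forall>i\<le>N. 0 \<le> u i \<and> u i < L"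
    and sep: "\<forall>i\<le>N. \<forall>j\<le>N. i \<noteq> j \<longrightarrow> l \<le> \<bar>u i - u j\<bar>"
  shows "real N \<le> L / l"
proof -
  define f where "f i = nat \<lfloor>u i / l\<rfloor>" for i
  have "inj_on f {..N}"
  proof (rule inj_onI)
    fix i j assume ij: "i\<in>{..N}" "j\<in>{..N}" "f i = f j"
    show "i = j"
    proof (rule ccontr)
      assume ne: "i \<noteq> j"
      have "0 \<le> u i / l" "0 \<le> u j / l" using rng ij lpos by auto
      then have "\<lfloor>u i / l\<rfloor> = \<lfloor>u j / l\<rfloor>" using ij(3) unfolding f_def by (simp add: eq_nat_nat_iff)
      then have "\<bar>u i / l - u j / l\<bar> < 1" by linarith
      then have "\<bar>u i - u j\<bar> / l < 1" using lpos by (simp add: diff_divide_distrib[symmetric])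
      then have "\<bar>u i - u j\<bar> < l" using lpos by (simp add: divide_less_eq)
      then show False using sep ij ne by force
    qed
  qed
  moreover have "f ` {..N} \<subseteq> {..nat \<lfloor>L / l\<rfloor>}"
  proof
    fix y assume "y \<in> f ` {..N}"
    then obtain i where i: "i \<le> N" "y = f i" by auto
    have "u i / l \<le> L / l" using rng i lpos by (simp add: divide_right_mono less_imp_le)
    then show "y \<in> {..nat \<lfloor>L / l\<rfloor>}" using i unfolding f_def by (simp add: floor_mono nat_mono)
  qed
  ultimately have "card {..N} \<le> card {..nat \<lfloor>L / l\<rfloor>}" by (meson card_inj_on_le finite_atMost)
  then have N: "N \<le> nat \<lfloor>L / l\<rfloor>" by simp
  have "0 \<le> L / l" using rng lpos by (metis le0 less_eq_real_def order.strict_trans1 zero_le_divide_iff)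
  then have "0 \<le> \<lfloor>L / l\<rfloor>" by simp
  then have "int N \<le> \<lfloor>L / l\<rfloor>" using N by (simp add: le_nat_iff)
  then have "real_of_int (int N) \<le> L / l" using le_floor_iff by blast
  then show ?thesis by simp
qed

locale ptm =
  fixes T :: "real \<Rightarrow> real" and L :: real and S :: "real set"
  assumes Lpos: "0 < L" and finS: "finite S" and S0: "0 \<in> S" and Ssub: "S \<subseteq> {0..<L}"
    and Tmap: "\<And>x. x \<in> {0..<L} \<Longrightarrow> T x \<in> {0..<L}"
    and Tinj: "inj_on T {0..<L}"
    and Ttr: "\<And>x y. 0 \<le> x \<Longrightarrow> x \<le> y \<Longrightarrow> y < L \<Longrightarrow> (\<forall>s\<in>S. \<not> (x < s \<and> s \<le> y)) \<Longrightarrow> T y = T x + (y - x)"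
begin

lemma Tn_map: "x \<in> {0..<L} \<Longrightarrow> (T^^n) x \<in> {0..<L}"
proof (induction n)
  case 0 then show ?case by simp
next
  case (Suc n) then show ?case using Tmap[of "(T^^n) x"] by simp
qed

lemma Tn_inj: "inj_on (T^^n) {0..<L}"
proof (induction n)
  case 0 then show ?case by simp
next
  case (Suc n)
  have "inj_on (T \<circ> (T^^n)) {0..<L}"
    using Suc Tinj Tn_map by (intro comp_inj_on) (auto intro: inj_on_subset)
  then show ?case by (simp add: comp_def)
qed

lemma Tn_add: "(T^^(m+n)) x = (T^^m) ((T^^n) x)"
  by (simp add: funpow_add)

context
  fixes p q :: real
  assumes pq: "0 \<le> p" "p < q" "q \<le> L"
begin

definition "Q = {p..<q}"
definition "FF = insert p (insert q S)"
definition "Zc = {w \<in> Q. \<exists>n. (T^^n) w \<in> FF \<and> (\<forall>i. 1 \<le> i \<longrightarrow> i < n \<longrightarrow> (T^^i) w \<notin> Q)}"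

lemma QI: "Q \<subseteq> {0..<L}" using pq unfolding Q_def by auto

lemma Zf_fin: "finite {w \<in> Q. \<exists>n. (T^^n) w = f \<and> (\<forall>i. 1 \<le> i \<longrightarrow> i < n \<longrightarrow> (T^^i) w \<notin> Q)}"
  (is "finite ?Z")
proof -
  have key: "w1 = w2" if w1: "w1 \<in> ?Z" "w1 \<noteq> f" and w2: "w2 \<in> ?Z" "w2 \<noteq> f" for w1 w2
  proof -
    have gen: "w1 = w2" if "n1 \<le> n2" and
       a: "w1 \<in> Q" "(T^^n1) w1 = f" "w1 \<noteq> f" and
       b: "w2 \<in> Q" "(T^^n2) w2 = f" "\<forall>i. 1 \<le> i \<longrightarrow> i < n2 \<longrightarrow> (T^^i) w2 \<notin> Q"
       for w1 w2 n1 n2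
    proof -
      have "n1 \<noteq> 0"
      proof
        assume "n1 = 0" then show False using a by simp
      qed
      show "w1 = w2"
      proof (cases "n1 = n2")
        case True
        then have "(T^^n1) w1 = (T^^n1) w2" using a b by simp
        moreover have "w1 \<in> {0..<L}" "w2 \<in> {0..<L}" using a b QI by auto
        ultimately show ?thesis using inj_onD[OF Tn_inj] by blast
      next
        case False
        then have lt: "n1 < n2" using that by auto
        have "(T^^n2) w2 = (T^^n1) ((T^^(n2-n1)) w2)" using lt Tn_add[of n1 "n2-n1" w2] by simp
        then have "(T^^n1) ((T^^(n2-n1)) w2) = (T^^n1) w1" using a b by simp
        then have "(T^^(n2-n1)) w2 = w1" using inj_onD[OF Tn_inj[of n1]] Tn_map a b QI by blast
        then have "(T^^(n2-n1)) w2 \<in> Q" using a by simp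
        moreover have "1 \<le> n2 - n1" "n2 - n1 < n2" using lt \<open>n1 \<noteq> 0\<close> by auto
        ultimately show ?thesis using b by blast
      qed
    qed
    obtain n1 where n1: "w1 \<in> Q" "(T^^n1) w1 = f" "\<forall>i. 1 \<le> i \<longrightarrow> i < n1 \<longrightarrow> (T^^i) w1 \<notin> Q" using w1 by auto
    obtain n2 where n2: "w2 \<in> Q" "(T^^n2) w2 = f" "\<forall>i. 1 \<le> i \<longrightarrow> i < n2 \<longrightarrow> (T^^i) w2 \<notin> Q" using w2 by auto
    show ?thesis
    proof (cases "n1 \<le> n2")
      case True then show ?thesis using gen[of n1 n2 w1 w2] n1 n2 w1 w2 by blast
    next
      case False then show ?thesis using gen[of n2 n1 w2 w1] n1 n2 w1 w2 by auto
    qed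
  qed
  show ?thesis
  proof (cases "?Z - {f} = {}")
    case True
    then have "?Z \<subseteq> {f}" by blast
    then show ?thesis using finite_subset by blast
  next
    case False
    then obtain w0 where "w0 \<in> ?Z - {f}" by blast
    then have "?Z \<subseteq> {f, w0}" using key by blast
    then show ?thesis using finite_subset by blast
  qed
qed

lemma Zc_fin: "finite Zc"
proof -
  have "Zc \<subseteq> (\<Union>f\<in>FF. {w \<in> Q. \<exists>n. (T^^n) w = f \<and> (\<forall>i. 1 \<le> i \<longrightarrow> i < n \<longrightarrow> (T^^i) w \<notin> Q)})"
    unfolding Zc_def by blast
  moreover have "finite FF" unfolding FF_def using finS by simp
  ultimately show ?thesis using Zf_fin by (meson finite_UN_I finite_subset)
qed


lemma piece_H:
  assumes ab: "p \<le> a" "a < b" "b \<le> q" and nocut: "\<forall>\<zeta>\<in>Zc. \<not> (a < \<zeta> \<and> \<zeta> < b)"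
  shows "(\<forall>i. 1 \<le> i \<longrightarrow> i < j \<longrightarrow> (T^^i) ` {a..<b} \<inter> Q = {}) \<Longrightarrow>
         (\<exists>c. \<forall>x\<in>{a..<b}. (T^^j) x = x + c) \<and> (1 \<le> j \<longrightarrow> (T^^j) ` {a..<b} \<subseteq> Q \<or> (T^^j) ` {a..<b} \<inter> Q = {})"
proof (induction j)
  case 0 then show ?case by (auto intro: exI[of _ 0])
next
  case (Suc j)
  let ?W = "{a..<b}"
  have WQ: "?W \<subseteq> Q" using ab unfolding Q_def by auto
  have WI: "?W \<subseteq> {0..<L}" using WQ QI by (rule subset_trans)
  have prem: "\<forall>i. 1 \<le> i \<longrightarrow> i < j \<longrightarrow> (T^^i) ` ?W \<inter> Q = {}" using Suc.prems by auto
  obtain c where c: "\<forall>x\<in>?W. (T^^j) x = x + c" using Suc.IH prem by blast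
  have notQ: "(T^^i) w \<notin> Q" if "w \<in> ?W" "1 \<le> i" "i < Suc j" for w i
    using Suc.prems that by blast
  have cut: "\<not> (a < w)" if w: "w \<in> ?W" "n \<le> Suc j" "(T^^n) w \<in> FF" for w n
  proof -
    have "\<forall>i. 1 \<le> i \<longrightarrow> i < n \<longrightarrow> (T^^i) w \<notin> Q" using notQ w by auto
    then have "w \<in> Zc" unfolding Zc_def using WQ w by auto
    then show "\<not> a < w" using nocut w by auto
  qed
  have aI: "a \<in> ?W" using ab by auto
  have Ta: "(T^^j) a = a + c" using c aI by blast
  have TaI: "a + c \<in> {0..<L}" using Ta Tn_map[of a j] WI aI by auto
  define c' where "c' = T (a + c) - a"
  have step: "\<forall>x\<in>?W. (T^^Suc j) x = x + c'"
  proof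
    fix x assume x: "x \<in> ?W"
    have TxI: "x + c \<in> {0..<L}" using c x Tn_map[of x j] WI by auto
    have "T (x + c) = T (a + c) + ((x + c) - (a + c))"
    proof (rule Ttr)
      show "0 \<le> a + c" using TaI by auto
      show "a + c \<le> x + c" using x by auto
      show "x + c < L" using TxI by auto
      show "\<forall>s\<in>S. \<not> (a + c < s \<and> s \<le> x + c)"
      proof (intro ballI notI)
        fix s assume s: "s \<in> S" "a + c < s \<and> s \<le> x + c"
        have w: "s - c \<in> ?W" using s x by auto
        have "(T^^j) (s - c) = s" using c w by auto
        then have "(T^^j) (s - c) \<in> FF" using s unfolding FF_def by auto
        then have "\<not> a < s - c" using cut[OF w, of j] by auto
        then show False using s by auto
      qed
    qed
    then show "(T^^Suc j) x = x + c'" using c x unfolding c'_def by simp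
  qed
  moreover have "(T^^Suc j) ` ?W \<subseteq> Q \<or> (T^^Suc j) ` ?W \<inter> Q = {}"
  proof (rule ccontr)
    assume "\<not> ?thesis"
    then obtain x1 x2 where x1: "x1 \<in> ?W" "(T^^Suc j) x1 \<in> Q" and x2: "x2 \<in> ?W" "(T^^Suc j) x2 \<notin> Q" by blast
    have e1: "x1 + c' \<in> Q" and e2: "x2 + c' \<notin> Q" using step x1 x2 by auto
    then consider "x2 + c' < p" | "x2 + c' \<ge> q" unfolding Q_def by fastforce
    then show False
    proof cases
      case 1
      have w: "p - c' \<in> ?W" "a < p - c'" using 1 e1 x1 x2 unfolding Q_def by auto
      have "(T^^Suc j) (p - c') = p" using step w by auto
      then have "(T^^Suc j) (p - c') \<in> FF" unfolding FF_def by auto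
      then show False using cut[OF w(1), of "Suc j"] w by auto
    next
      case 2
      have w: "q - c' \<in> ?W" "a < q - c'" using 2 e1 x1 x2 unfolding Q_def by auto
      have "(T^^Suc j) (q - c') = q" using step w by auto
      then have "(T^^Suc j) (q - c') \<in> FF" unfolding FF_def by auto
      then show False using cut[OF w(1), of "Suc j"] w by auto
    qed
  qed
  ultimately show ?case by blast
qed

lemma piece:
  assumes ab: "p \<le> a" "a < b" "b \<le> q" and nocut: "\<forall>\<zeta>\<in>Zc. \<not> (a < \<zeta> \<and> \<zeta> < b)"
  shows "\<exists>r\<ge>1. (\<forall>j\<le>r. \<exists>c. \<forall>x\<in>{a..<b}. (T^^j) x = x + c) \<and> (T^^r) ` {a..<b} \<subseteq> Q
     \<and> (\<forall>j. 1 \<le> j \<longrightarrow> j < r \<longrightarrow> (T^^j) ` {a..<b} \<inter> Q = {})"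
proof -
  let ?W = "{a..<b}"
  note H = piece_H[OF ab nocut]
  have WQ: "?W \<subseteq> Q" using ab unfolding Q_def by auto
  have WI: "?W \<subseteq> {0..<L}" using WQ QI by (rule subset_trans)
  have aI: "a \<in> ?W" using ab by auto
  define N where "N = nat \<lfloor>L / (b - a)\<rfloor> + 1"
  have ex: "\<exists>r. 1 \<le> r \<and> r \<le> N \<and> (T^^r) ` ?W \<inter> Q \<noteq> {}"
  proof (rule ccontr)
    assume C: "\<not> ?thesis"
    then have disj: "\<forall>i. 1 \<le> i \<longrightarrow> i \<le> N \<longrightarrow> (T^^i) ` ?W \<inter> Q = {}" by auto
    have "\<forall>j\<le>N. \<exists>c. \<forall>x\<in>?W. (T^^j) x = x + c"
    proof (intro allI impI)
      fix j assume "j \<le> N"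
      then have "\<forall>i. 1 \<le> i \<longrightarrow> i < j \<longrightarrow> (T^^i) ` ?W \<inter> Q = {}" using disj by auto
      then show "\<exists>c. \<forall>x\<in>?W. (T^^j) x = x + c" using H by blast
    qed
    then obtain cc where cc: "\<forall>j\<le>N. \<forall>x\<in>?W. (T^^j) x = x + cc j" by metis
    define u where "u j = a + cc j" for j
    have uT: "u j = (T^^j) a" if "j \<le> N" for j using cc aI that unfolding u_def by auto
    have urng: "\<forall>i\<le>N. 0 \<le> u i \<and> u i < L" using uT Tn_map WI aI by fastforce
    have aux: "b - a \<le> \<bar>u i - u j\<bar>" if ij: "i < j" "j \<le> N" for i j
    proof (rule ccontr)
      assume "\<not> b - a \<le> \<bar>u i - u j\<bar>"
      then have close: "\<bar>u i - u j\<bar> < b - a" by simp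
      have jiN: "1 \<le> j - i" "j - i \<le> N" using ij by auto
      have split: "(T^^j) y = (T^^i) ((T^^(j-i)) y)" for y using Tn_add[of i "j-i" y] ij by simp
      show False
      proof (cases "u i \<le> u j")
        case True
        let ?x = "a + (u j - u i)"
        have x: "?x \<in> ?W" using True close by auto
        have "(T^^i) ?x = ?x + cc i" using cc x ij by auto
        also have "\<dots> = u j" unfolding u_def by simp
        also have "\<dots> = (T^^i) ((T^^(j-i)) a)" using uT ij split by simp
        finally have "?x = (T^^(j-i)) a"
          using inj_onD[OF Tn_inj[of i]] x WI Tn_map aI by blast
        then have "(T^^(j-i)) a \<in> (T^^(j-i)) ` ?W \<inter> Q" using x WQ aI by auto
        then show False using disj jiN by blast
      next
        case False
        let ?x = "a + (u i - u j)"
        have x: "?x \<in> ?W" using False close by auto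
        have "(T^^i) ((T^^(j-i)) ?x) = (T^^j) ?x" using split by simp
        also have "\<dots> = ?x + cc j" using cc x ij by auto
        also have "\<dots> = u i" unfolding u_def by simp
        also have "\<dots> = (T^^i) a" using uT ij by simp
        finally have "(T^^(j-i)) ?x = a"
          using inj_onD[OF Tn_inj[of i]] x WI Tn_map aI by blast
        then have "a \<in> (T^^(j-i)) ` ?W \<inter> Q" using x WQ aI by (metis IntI image_eqI subsetD)
        then show False using disj jiN by blast
      qed
    qed
    have sep: "\<forall>i\<le>N. \<forall>j\<le>N. i \<noteq> j \<longrightarrow> b - a \<le> \<bar>u i - u j\<bar>"
    proof (intro allI impI)
      fix i j assume "i \<le> N" "j \<le> N" "i \<noteq> j"
      then show "b - a \<le> \<bar>u i - u j\<bar>" using aux[of i j] aux[of j i] by (cases "i < j") (auto simp: abs_minus_commute)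
    qed
    have "real N \<le> L / (b - a)" using pigeon_intervals[OF _ urng sep] ab by auto
    moreover have "real N > L / (b - a)" unfolding N_def by linarith
    ultimately show False by linarith
  qed
  define r where "r = (LEAST r. 1 \<le> r \<and> r \<le> N \<and> (T^^r) ` ?W \<inter> Q \<noteq> {})"
  have r: "1 \<le> r" "r \<le> N" "(T^^r) ` ?W \<inter> Q \<noteq> {}" using LeastI_ex[OF ex] unfolding r_def by auto
  have rmin: "\<forall>j. 1 \<le> j \<longrightarrow> j < r \<longrightarrow> (T^^j) ` ?W \<inter> Q = {}"
  proof (intro allI impI)
    fix j assume j: "1 \<le> j" "j < r"
    then have "\<not> (1 \<le> j \<and> j \<le> N \<and> (T^^j) ` ?W \<inter> Q \<noteq> {})" using not_less_Least[of j] unfolding r_def by blast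
    then show "(T^^j) ` ?W \<inter> Q = {}" using j r by auto
  qed
  have "(T^^r) ` ?W \<subseteq> Q" using H[of r] rmin r by auto
  moreover have "\<forall>j\<le>r. \<exists>c. \<forall>x\<in>?W. (T^^j) x = x + c"
  proof (intro allI impI)
    fix j assume "j \<le> r"
    then have "\<forall>i. 1 \<le> i \<longrightarrow> i < j \<longrightarrow> (T^^i) ` ?W \<inter> Q = {}" using rmin by auto
    then show "\<exists>c. \<forall>x\<in>?W. (T^^j) x = x + c" using H by blast
  qed
  ultimately show ?thesis using r rmin by blast
qed

definition "Zp = insert p (insert q Zc)"
definition "lo z = Max {\<zeta>\<in>Zp. \<zeta> \<le> z}"
definition "hi z = Min {\<zeta>\<in>Zp. z < \<zeta>}"

lemma Zp_fin: "finite Zp" unfolding Zp_def using Zc_fin by simp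

lemma lohi: assumes "z \<in> Q"
  shows "p \<le> lo z" "lo z \<le> z" "z < hi z" "hi z \<le> q" "\<forall>\<zeta>\<in>Zc. \<not> (lo z < \<zeta> \<and> \<zeta> < hi z)"
    "lo z \<in> Zp" "hi z \<in> Zp"
proof -
  have f1: "finite {\<zeta>\<in>Zp. \<zeta> \<le> z}" "finite {\<zeta>\<in>Zp. z < \<zeta>}" using Zp_fin by auto
  have p1: "p \<in> {\<zeta>\<in>Zp. \<zeta> \<le> z}" using assms unfolding Q_def Zp_def by auto
  have q1: "q \<in> {\<zeta>\<in>Zp. z < \<zeta>}" using assms unfolding Q_def Zp_def by auto
  have l: "lo z \<in> {\<zeta>\<in>Zp. \<zeta> \<le> z}" unfolding lo_def using f1 p1 by (intro Max_in) auto
  have h: "hi z \<in> {\<zeta>\<in>Zp. z < \<zeta>}" unfolding hi_def using f1 q1 by (intro Min_in) auto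
  show "p \<le> lo z" unfolding lo_def using f1 p1 by (intro Max_ge) auto
  show "lo z \<le> z" using l by auto
  show "z < hi z" using h by auto
  show "hi z \<le> q" unfolding hi_def using f1 q1 by (intro Min_le) auto
  show "lo z \<in> Zp" "hi z \<in> Zp" using l h by auto
  show "\<forall>\<zeta>\<in>Zc. \<not> (lo z < \<zeta> \<and> \<zeta> < hi z)"
  proof (intro ballI notI)
    fix \<zeta> assume "\<zeta> \<in> Zc" "lo z < \<zeta> \<and> \<zeta> < hi z"
    then have zp: "\<zeta> \<in> Zp" unfolding Zp_def by auto
    show False
    proof (cases "\<zeta> \<le> z")
      case True
      then have "\<zeta> \<le> lo z" unfolding lo_def using f1 zp by (intro Max_ge) auto
      then show False using \<open>lo z < \<zeta> \<and> \<zeta> < hi z\<close> by auto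
    next
      case False
      then have "hi z \<le> \<zeta>" unfolding hi_def using f1 zp by (intro Min_le) auto
      then show False using \<open>lo z < \<zeta> \<and> \<zeta> < hi z\<close> by auto
    qed
  qed
qed

lemma tower_ctx:
  "\<exists>P. finite P \<and> Q = (\<Union>(a,b)\<in>P. {a..<b}) \<and> (\<forall>a b. (a,b)\<in>P \<longrightarrow> p \<le> a \<and> a < b \<and> b \<le> q \<and>
     (\<exists>r\<ge>1. (\<forall>j\<le>r. \<exists>c. \<forall>x\<in>{a..<b}. (T^^j) x = x + c) \<and> (T^^r) ` {a..<b} \<subseteq> Q
     \<and> (\<forall>j. 1 \<le> j \<longrightarrow> j < r \<longrightarrow> (T^^j) ` {a..<b} \<inter> Q = {})))"
proof (intro exI conjI)
  let ?P = "(\<lambda>z. (lo z, hi z)) ` Q"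
  have "?P \<subseteq> Zp \<times> Zp"
  proof (rule subsetI)
    fix ab assume "ab \<in> ?P"
    then obtain z where "z\<in>Q" "ab = (lo z, hi z)" by blast
    then show "ab \<in> Zp \<times> Zp" using lohi(6,7) by simp
  qed
  then show "finite ?P" using Zp_fin by (meson finite_SigmaI finite_subset)
  show "Q = (\<Union>(a,b)\<in>?P. {a..<b})"
  proof
    show "Q \<subseteq> (\<Union>(a,b)\<in>?P. {a..<b})"
    proof
      fix z assume z: "z \<in> Q"
      then have "z \<in> {lo z..<hi z}" using lohi(2,3) by simp
      then show "z \<in> (\<Union>(a,b)\<in>?P. {a..<b})" using z by blast
    qed
    show "(\<Union>(a,b)\<in>?P. {a..<b}) \<subseteq> Q"
    proof
      fix x assume "x \<in> (\<Union>(a,b)\<in>?P. {a..<b})"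
      then obtain z where z: "z\<in>Q" "x \<in> {lo z..<hi z}" by blast
      have "p \<le> lo z" "hi z \<le> q" using lohi[OF z(1)] by simp_all
      then show "x \<in> Q" using z(2) unfolding Q_def by simp
    qed
  qed
  show "\<forall>a b. (a,b)\<in>?P \<longrightarrow> p \<le> a \<and> a < b \<and> b \<le> q \<and>
     (\<exists>r\<ge>1. (\<forall>j\<le>r. \<exists>c. \<forall>x\<in>{a..<b}. (T^^j) x = x + c) \<and> (T^^r) ` {a..<b} \<subseteq> Q
     \<and> (\<forall>j. 1 \<le> j \<longrightarrow> j < r \<longrightarrow> (T^^j) ` {a..<b} \<inter> Q = {}))"
  proof (intro allI impI)
    fix a b assume "(a,b) \<in> ?P"
    then obtain z where z: "z \<in> Q" "(a,b) = (lo z, hi z)" by blast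
    then have ab: "a = lo z" "b = hi z" by simp_all
    have h: "p \<le> lo z" "lo z < hi z" "hi z \<le> q" "\<forall>\<zeta>\<in>Zc. \<not> (lo z < \<zeta> \<and> \<zeta> < hi z)"
      using lohi[OF z(1)] by simp_all
    show "p \<le> a \<and> a < b \<and> b \<le> q \<and>
     (\<exists>r\<ge>1. (\<forall>j\<le>r. \<exists>c. \<forall>x\<in>{a..<b}. (T^^j) x = x + c) \<and> (T^^r) ` {a..<b} \<subseteq> Q
     \<and> (\<forall>j. 1 \<le> j \<longrightarrow> j < r \<longrightarrow> (T^^j) ` {a..<b} \<inter> Q = {}))"
      unfolding ab using piece[OF h] h by (intro conjI)
  qed
qed

end

lemma tower:
  assumes "0 \<le> p" "p < q" "q \<le> L"
  shows "\<exists>P. finite P \<and> {p..<q} = (\<Union>(a,b)\<in>P. {a..<b}) \<and> (\<forall>a b. (a,b)\<in>P \<longrightarrow> p \<le> a \<and> a < b \<and> b \<le> q \<and>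
     (\<exists>r\<ge>1. (\<forall>j\<le>r. \<exists>c. \<forall>x\<in>{a..<b}. (T^^j) x = x + c) \<and> (T^^r) ` {a..<b} \<subseteq> {p..<q}
     \<and> (\<forall>j. 1 \<le> j \<longrightarrow> j < r \<longrightarrow> (T^^j) ` {a..<b} \<inter> {p..<q} = {})))"
  using tower_ctx[OF assms] unfolding Q_def[OF assms] .

lemma return:
  assumes "0 \<le> p" "p < q" "q \<le> L" "z \<in> {p..<q}"
  shows "\<exists>n\<ge>1. (T^^n) z \<in> {p..<q}"
proof -
  obtain P where PP: "finite P \<and> {p..<q} = (\<Union>(a,b)\<in>P. {a..<b}) \<and> (\<forall>a b. (a,b)\<in>P \<longrightarrow> p \<le> a \<and> a < b \<and> b \<le> q \<and>
     (\<exists>r\<ge>1. (\<forall>j\<le>r. \<exists>c. \<forall>x\<in>{a..<b}. (T^^j) x = x + c) \<and> (T^^r) ` {a..<b} \<subseteq> {p..<q}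
     \<and> (\<forall>j. 1 \<le> j \<longrightarrow> j < r \<longrightarrow> (T^^j) ` {a..<b} \<inter> {p..<q} = {})))"
    using tower[OF assms(1-3)] by (rule exE)
  note P = PP[THEN conjunct1] PP[THEN conjunct2, THEN conjunct1] PP[THEN conjunct2, THEN conjunct2]
  from assms(4) have "z \<in> (\<Union>(a,b)\<in>P. {a..<b})" unfolding P(2) .
  then obtain a b where ab: "(a,b) \<in> P" "z \<in> {a..<b}" by blast
  have "\<exists>r\<ge>1. (\<forall>j\<le>r. \<exists>c. \<forall>x\<in>{a..<b}. (T^^j) x = x + c) \<and> (T^^r) ` {a..<b} \<subseteq> {p..<q}
     \<and> (\<forall>j. 1 \<le> j \<longrightarrow> j < r \<longrightarrow> (T^^j) ` {a..<b} \<inter> {p..<q} = {})"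
    using P(3)[rule_format, OF ab(1)] by (elim conjE)
  then obtain r where r: "r \<ge> 1 \<and> ((\<forall>j\<le>r. \<exists>c. \<forall>x\<in>{a..<b}. (T^^j) x = x + c) \<and> (T^^r) ` {a..<b} \<subseteq> {p..<q}
     \<and> (\<forall>j. 1 \<le> j \<longrightarrow> j < r \<longrightarrow> (T^^j) ` {a..<b} \<inter> {p..<q} = {}))" by (rule exE)
  have "(T^^r) ` {a..<b} \<subseteq> {p..<q}" using r by (elim conjE)
  then have "(T^^r) z \<in> {p..<q}" using ab(2) by (rule subsetD[OF _ imageI])
  moreover have "r \<ge> 1" using r by (elim conjE)
  ultimately show ?thesis by (intro exI conjI)
qed

end

definition LB :: "real set \<Rightarrow> real set" where
  "LB Z = {s\<in>Z. s = 0 \<or> (\<exists>\<delta>>0. \<forall>x. s - \<delta> < x \<longrightarrow> x < s \<longrightarrow> x \<notin> Z)}"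

lemma LB_union_fin:
  assumes "Z = (\<Union>(a,b)\<in>P. {a..<b})"
  shows "LB Z \<subseteq> insert 0 (fst ` P)"
proof
  fix s assume s: "s \<in> LB Z"
  show "s \<in> insert 0 (fst ` P)"
  proof (cases "s = 0")
    case True then show ?thesis by simp
  next
    case False
    then obtain \<delta> where d: "\<delta> > 0" "\<forall>x. s - \<delta> < x \<longrightarrow> x < s \<longrightarrow> x \<notin> Z" using s unfolding LB_def by auto
    have "s \<in> Z" using s unfolding LB_def by auto
    then obtain a b where ab: "(a,b) \<in> P" "a \<le> s" "s < b" using assms by auto
    have "a = s"
    proof (rule ccontr)
      assume "a \<noteq> s"
      then have as: "a < s" using ab by simp
      let ?x = "max a (s - \<delta>/2)"
      have "s - \<delta> < ?x" "?x < s" using as d by auto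
      then have "?x \<notin> Z" using d by blast
      moreover have "?x \<in> {a..<b}" using as ab d by auto
      ultimately show False using assms ab(1) by blast
    qed
    then show ?thesis using ab by force
  qed
qed

lemma LB_compl_fin:
  assumes "finite P" "Y = (\<Union>(a,b)\<in>P. {a..<b})"
  shows "LB ({0..<L} - Y) \<subseteq> insert 0 (snd ` P)"
proof
  fix s assume s: "s \<in> LB ({0..<L} - Y)"
  show "s \<in> insert 0 (snd ` P)"
  proof (cases "s = 0")
    case True then show ?thesis by simp
  next
    case False
    then obtain \<delta> where d: "\<delta> > 0" "\<forall>x. s - \<delta> < x \<longrightarrow> x < s \<longrightarrow> x \<notin> {0..<L} - Y" using s unfolding LB_def by auto
    have sI: "s \<in> {0..<L}" "s \<notin> Y" using s unfolding LB_def by auto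
    then have spos: "s > 0" using False by auto
    show ?thesis
    proof (rule ccontr)
      assume nb: "s \<notin> insert 0 (snd ` P)"
      define M where "M = insert (max 0 (s - \<delta>)) ({b. \<exists>a. (a,b)\<in>P \<and> b < s} \<union> {a. \<exists>b. (a,b)\<in>P \<and> a < s})"
      have s1: "{b. \<exists>a. (a,b)\<in>P \<and> b < s} \<subseteq> snd ` P" by force
      have s2: "{a. \<exists>b. (a,b)\<in>P \<and> a < s} \<subseteq> fst ` P" by force
      have fM: "finite M" unfolding M_def using assms(1) finite_subset[OF s1] finite_subset[OF s2] by auto
      have Mlt: "\<forall>m\<in>M. m < s" unfolding M_def using spos d by auto
      define m where "m = Max M"
      have mM: "m \<in> M" unfolding m_def using fM M_def by (intro Max_in) auto
      have ms: "m < s" using Mlt mM by auto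
      have mge: "\<And>y. y \<in> M \<Longrightarrow> y \<le> m" unfolding m_def using fM by auto
      let ?x = "(m + s) / 2"
      have x: "m < ?x" "?x < s" using ms by auto
      have "max 0 (s - \<delta>) \<le> m" using mge[of "max 0 (s - \<delta>)"] unfolding M_def by blast
      then have x0: "0 \<le> ?x" "s - \<delta> < ?x" using x by auto
      then have "?x \<in> Y" using d x sI by auto
      then obtain a b where ab: "(a,b) \<in> P" "a \<le> ?x" "?x < b" using assms(2) by auto
      have "a < s" using ab x by auto
      then have "a \<in> M" unfolding M_def using ab by auto
      have "\<not> b < s"
      proof
        assume "b < s" then have "b \<in> M" unfolding M_def using ab by auto
        then show False using mge ab x by fastforce
      qed
      moreover have "b \<noteq> s" using nb ab by force
      ultimately have "s \<in> {a..<b}" using \<open>a < s\<close> by auto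
      then show False using sI assms(2) ab(1) by blast
    qed
  qed
qed

lemma LB_ne_union:
  assumes "finite P" "P \<noteq> {}" "Z = (\<Union>(a,b)\<in>P. {a..<b})" "\<forall>a b. (a,b)\<in>P \<longrightarrow> a < b"
  shows "LB Z \<noteq> {}"
proof -
  define m where "m = Min (fst ` P)"
  have "m \<in> fst ` P" unfolding m_def using assms by (intro Min_in) auto
  then obtain b where mb: "(m,b) \<in> P" by force
  then have mZ: "m \<in> Z" using assms by force
  have "\<forall>x. m - 1 < x \<longrightarrow> x < m \<longrightarrow> x \<notin> Z"
  proof (intro allI impI notI)
    fix x assume "x < m" "x \<in> Z"
    then obtain a b' where "(a,b') \<in> P" "a \<le> x" using assms(3) by auto
    moreover have "m \<le> a" unfolding m_def using assms(1) \<open>(a,b') \<in> P\<close> by (metis Min_le finite_imageI fst_conv image_eqI)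
    ultimately show False using \<open>x < m\<close> by auto
  qed
  then have "m \<in> LB Z" using mZ unfolding LB_def by (auto intro!: exI[of _ 1])
  then show ?thesis by auto
qed

lemma LB_ne_compl:
  assumes "Y = (\<Union>(a,b)\<in>P. {a..<b})" "W = {0..<L} - Y" "W \<noteq> {}"
  shows "LB W \<noteq> {}"
proof -
  define s where "s = Inf W"
  have bdd: "bdd_below W" using assms(2) by (auto intro: bdd_belowI[of _ 0])
  have s0: "0 \<le> s" unfolding s_def using assms(2,3) by (auto intro!: cInf_greatest)
  obtain w where w: "w \<in> W" using assms(3) by auto
  have sw: "s \<le> w" unfolding s_def using bdd w by (rule cInf_lower[rotated])
  have sL: "s < L" using sw w assms(2) by auto
  have low: "\<And>x. x \<in> W \<Longrightarrow> s \<le> x" unfolding s_def using bdd by (simp add: cInf_lower)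
  have "s \<notin> Y"
  proof
    assume "s \<in> Y"
    then obtain a b where ab: "(a,b) \<in> P" "a \<le> s" "s < b" using assms(1) by auto
    have "\<forall>x\<in>W. b \<le> x"
    proof
      fix x assume x: "x \<in> W"
      then have "s \<le> x" using low by auto
      moreover have "x \<notin> {a..<b}" using x assms(1,2) ab(1) by blast
      ultimately show "b \<le> x" using ab by auto
    qed
    then have "b \<le> s" unfolding s_def using assms(3) by (intro cInf_greatest) auto
    then show False using ab by auto
  qed
  then have sW: "s \<in> W" using s0 sL assms(2) by auto
  have "\<forall>x. s - 1 < x \<longrightarrow> x < s \<longrightarrow> x \<notin> W" using low by force
  then have "s \<in> LB W" using sW unfolding LB_def by (auto intro!: exI[of _ 1])
  then show ?thesis by auto
qed

context ptm
begin

lemma LB_step: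
  assumes Z: "Z \<subseteq> {0..<L}" "\<forall>z\<in>Z. T z \<in> Z" "\<forall>z\<in>{0..<L} - Z. T z \<notin> Z"
    and s: "s \<in> LB Z" "s \<notin> S"
  shows "T s \<in> LB Z"
proof -
  have sZ: "s \<in> Z" using s unfolding LB_def by auto
  have sn0: "s \<noteq> 0" using s S0 by auto
  then obtain \<delta> where d: "\<delta> > 0" "\<forall>x. s - \<delta> < x \<longrightarrow> x < s \<longrightarrow> x \<notin> Z" using s unfolding LB_def by auto
  have sI: "0 < s" "s < L" using sZ Z sn0 by force+
  define \<sigma> where "\<sigma> = Max {t\<in>S. t < s}"
  have fin: "finite {t\<in>S. t < s}" using finS by auto
  have ne: "0 \<in> {t\<in>S. t < s}" using S0 sI by auto
  have \<sigma>in: "\<sigma> \<in> {t\<in>S. t < s}" unfolding \<sigma>_def using fin ne by (intro Max_in) auto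
  have \<sigma>ge: "\<And>t. t \<in> S \<Longrightarrow> t < s \<Longrightarrow> t \<le> \<sigma>" unfolding \<sigma>_def using fin by auto
  have \<sigma>0: "0 \<le> \<sigma>" using \<sigma>ge[of 0] S0 sI by auto
  define \<delta>' where "\<delta>' = min \<delta> (s - \<sigma>)"
  have d': "\<delta>' > 0" "\<delta>' \<le> \<delta>" "\<delta>' \<le> s - \<sigma>" unfolding \<delta>'_def using d \<sigma>in by auto
  have TsZ: "T s \<in> Z" using Z sZ by auto
  have "\<forall>x. T s - \<delta>' < x \<longrightarrow> x < T s \<longrightarrow> x \<notin> Z"
  proof (intro allI impI)
    fix x assume x: "T s - \<delta>' < x" "x < T s"
    define e where "e = T s - x"
    have e: "0 < e" "e < \<delta>'" using x unfolding e_def by auto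
    define y where "y = s - e"
    have y: "0 \<le> y" "y \<le> s" "s - \<delta> < y" "y < s" using e d' \<sigma>0 sI unfolding y_def by auto
    have "T s = T y + (s - y)"
    proof (rule Ttr)
      show "0 \<le> y" "y \<le> s" "s < L" using y sI by auto
      show "\<forall>t\<in>S. \<not> (y < t \<and> t \<le> s)"
      proof (intro ballI notI)
        fix t assume t: "t \<in> S" "y < t \<and> t \<le> s"
        then have "t \<noteq> s" using s by auto
        then have "t \<le> \<sigma>" using \<sigma>ge t by auto
        then show False using t e d' unfolding y_def by auto
      qed
    qed
    then have Ty: "T y = x" unfolding y_def e_def by simp
    have "y \<notin> Z" using d y by auto
    moreover have "y \<in> {0..<L}" using y sI by auto
    ultimately show "x \<notin> Z" using Z Ty by auto
  qed
  then show ?thesis using TsZ d' unfolding LB_def by auto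
qed

end


lemma finite_orbit_rep:
  assumes "finite F" "\<And>m. (G^^m) s \<in> F"
  obtains i j where "i < j" "(G^^i) s = (G^^j) s"
proof -
  have "\<exists>i j. i < j \<and> (G^^i) s = (G^^j) s"
  proof (rule ccontr)
    assume H: "\<not> (\<exists>i j. i < j \<and> (G^^i) s = (G^^j) s)"
    have "inj_on (\<lambda>m. (G^^m) s) {..card F}"
    proof (rule inj_onI)
      fix i j assume "i \<in> {..card F}" "j \<in> {..card F}" and e: "(G^^i) s = (G^^j) s"
      show "i = j"
      proof (rule ccontr)
        assume "i \<noteq> j"
        then have "i < j \<or> j < i" by auto
        then show False using H e by metis
      qed
    qed
    moreover have "(\<lambda>m. (G^^m) s) ` {..card F} \<subseteq> F" using assms by auto
    ultimately have "card {..card F} \<le> card F" using assms(1) by (meson card_inj_on_le)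
    then show False by simp
  qed
  then obtain i where "\<exists>j. i < j \<and> (G^^i) s = (G^^j) s" by (rule exE)
  then obtain j where "i < j \<and> (G^^i) s = (G^^j) s" by (rule exE)
  then have "i < j" "(G^^i) s = (G^^j) s" by simp_all
  then show ?thesis by (rule that)
qed

locale ptm2 = F: ptm T L S + B: ptm T' L S' for T T' L S S' +
  assumes inv1: "\<And>x. x \<in> {0..<L} \<Longrightarrow> T' (T x) = x"
    and inv2: "\<And>x. x \<in> {0..<L} \<Longrightarrow> T (T' x) = x"
    and K1: "\<And>z s m. z \<in> S \<Longrightarrow> s \<in> S \<Longrightarrow> s \<noteq> 0 \<Longrightarrow> 1 \<le> m \<Longrightarrow> (T^^m) z \<noteq> s"
    and K2: "T 0 \<noteq> 0"
    and K3: "S' = T ` S"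
begin

lemma invn1: "x \<in> {0..<L} \<Longrightarrow> (T'^^n) ((T^^n) x) = x"
proof (induction n arbitrary: x)
  case 0 then show ?case by simp
next
  case (Suc n)
  have "(T'^^Suc n) ((T^^Suc n) x) = (T'^^n) (T' (T ((T^^n) x)))"
    by (simp add: funpow_swap1)
  also have "\<dots> = (T'^^n) ((T^^n) x)" using inv1 F.Tn_map Suc.prems by simp
  finally show ?case using Suc by simp
qed

lemma invn2: "x \<in> {0..<L} \<Longrightarrow> (T^^n) ((T'^^n) x) = x"
proof (induction n arbitrary: x)
  case 0 then show ?case by simp
next
  case (Suc n)
  have "(T^^Suc n) ((T'^^Suc n) x) = (T^^n) (T (T' ((T'^^n) x)))"
    by (simp add: funpow_swap1)
  also have "\<dots> = (T^^n) ((T'^^n) x)" using inv2 B.Tn_map Suc.prems by simp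
  finally show ?case using Suc by simp
qed

lemma c0: "T' 0 \<in> S" "T' 0 \<noteq> 0" "T (T' 0) = 0"
proof -
  have "0 \<in> T ` S" using B.S0 K3 by simp
  then obtain c where c: "c \<in> S" "T c = 0" by auto
  have cI: "c \<in> {0..<L}" using c F.Ssub by auto
  have "T' 0 = c" using inv1[OF cI] c by simp
  then show "T' 0 \<in> S" using c by simp
  show "T (T' 0) = 0" using inv2 F.Lpos by simp
  show "T' 0 \<noteq> 0" using \<open>T' 0 = c\<close> c K2 by auto
qed

lemma TI: "x \<in> {0..<L} \<Longrightarrow> T x \<in> {0..<L}" using F.Tmap .

lemma noper:
  assumes sI: "s \<in> {0..<L}" and k: "1 \<le> k" and per: "(T^^k) s = s"
  shows False
proof -
  define Ob where "Ob = (\<lambda>i. (T^^i) s) ` {..<k}"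
  have Ofin: "finite Ob" unfolding Ob_def by simp
  have sO: "s \<in> Ob" unfolding Ob_def using k by (auto intro!: image_eqI[of _ _ 0])
  have OI: "Ob \<subseteq> {0..<L}" unfolding Ob_def using F.Tn_map sI by auto
  have Ocl: "T u \<in> Ob" if uO: "u \<in> Ob" for u
  proof -
    obtain i where i: "i < k" "u = (T^^i) s" using uO unfolding Ob_def by auto
    have To: "T u = (T^^Suc i) s" using i by simp
    show ?thesis
    proof (cases "Suc i < k")
      case True then show ?thesis using To unfolding Ob_def by blast
    next
      case False then have "Suc i = k" using i by auto
      then show ?thesis using To per sO by simp
    qed
  qed
  define mx where "mx u = Max {t\<in>S. t \<le> u}" for u
  have mx: "mx u \<in> S" "mx u \<le> u" "\<And>t. t \<in> S \<Longrightarrow> t \<le> u \<Longrightarrow> t \<le> mx u" if "u \<in> {0..<L}" for u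
  proof -
    have fin: "finite {t\<in>S. t \<le> u}" using F.finS by auto
    have ne: "0 \<in> {t\<in>S. t \<le> u}" using F.S0 that by auto
    have "mx u \<in> {t\<in>S. t \<le> u}" unfolding mx_def using fin ne by (intro Max_in) auto
    then show "mx u \<in> S" "mx u \<le> u" by auto
    show "\<And>t. t \<in> S \<Longrightarrow> t \<le> u \<Longrightarrow> t \<le> mx u" unfolding mx_def using fin by auto
  qed
  define g where "g u = u - mx u" for u
  define gm where "gm = Min (g ` Ob)"
  have "gm \<in> g ` Ob" unfolding gm_def using Ofin sO by (intro Min_in) auto
  then obtain os where os: "os \<in> Ob" "g os = gm" by auto
  have gmle: "gm \<le> g u" if "u \<in> Ob" for u unfolding gm_def using Ofin that by auto
  have gm0: "0 \<le> gm" using os mx[of os] OI unfolding g_def by auto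
  have shift: "T (u - gm) = T u - gm" if u: "u \<in> Ob" for u
  proof -
    have oI: "u \<in> {0..<L}" using u OI by auto
    have mxS: "mx u \<in> S" "mx u \<le> u" using mx[OF oI] by auto
    have "0 \<le> mx u" using mxS F.Ssub by auto
    have "T u = T (u - gm) + (u - (u - gm))"
    proof (rule F.Ttr)
      show "0 \<le> u - gm" using gmle[OF u] \<open>0 \<le> mx u\<close> unfolding g_def by auto
      show "u - gm \<le> u" using gm0 by auto
      show "u < L" using oI by auto
      show "\<forall>t\<in>S. \<not> (u - gm < t \<and> t \<le> u)"
      proof (intro ballI notI)
        fix t assume t: "t \<in> S" "u - gm < t \<and> t \<le> u"
        then have "t \<le> mx u" using mx(3)[OF oI] by auto
        then show False using t gmle[OF u] unfolding g_def by auto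
      qed
    qed
    then show ?thesis by simp
  qed
  have iter: "(T^^i) (os - gm) = (T^^i) os - gm \<and> (T^^i) os \<in> Ob" for i
  proof (induction i)
    case 0 then show ?case using os by simp
  next
    case (Suc i)
    then show ?case using shift[of "(T^^i) os"] Ocl[of "(T^^i) os"] by simp
  qed
  obtain i0 where i0: "os = (T^^i0) s" using os unfolding Ob_def by auto
  have "(T^^k) os = (T^^(k + i0)) s" using i0 by (simp add: funpow_add)
  also have "\<dots> = (T^^i0) ((T^^k) s)" by (simp add: funpow_add add.commute)
  also have "\<dots> = os" using per i0 by simp
  finally have perO: "(T^^k) os = os" .
  define z where "z = os - gm"
  have osI: "os \<in> {0..<L}" using os OI by auto
  have zS: "z \<in> S" unfolding z_def using os(2) mx[OF osI] unfolding g_def by auto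
  have perz: "(T^^k) z = z" unfolding z_def using iter[of k] perO by simp
  show False
  proof (cases "z = 0")
    case False then show False using K1[OF zS zS False k] perz by simp
  next
    case True
    then have per0: "(T^^k) 0 = 0" using perz by simp
    show False
    proof (cases "k = 1")
      case True then show False using per0 K2 by simp
    next
      case False
      then have k1: "1 \<le> k - 1" using k by auto
      have "(T^^k) 0 = T ((T^^(k-1)) 0)" using k by (metis Suc_diff_1 funpow.simps(2) comp_apply less_le_trans zero_less_one)
      then have "T ((T^^(k-1)) 0) = T (T' 0)" using per0 c0 by simp
      moreover have "(T^^(k-1)) 0 \<in> {0..<L}" using F.Tn_map F.Lpos by simp
      moreover have "T' 0 \<in> {0..<L}" using c0 F.Ssub by auto
      ultimately have "(T^^(k-1)) 0 = T' 0" using inj_onD[OF F.Tinj] by blast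
      then show False using K1[OF F.S0 c0(1) c0(2) k1] by simp
    qed
  qed
qed

lemma key_LB:
  assumes Z: "Z \<subseteq> {0..<L}" "\<forall>z\<in>Z. T z \<in> Z" "\<forall>z\<in>{0..<L} - Z. T z \<notin> Z"
     "\<forall>z\<in>Z. T' z \<in> Z" "\<forall>z\<in>{0..<L} - Z. T' z \<notin> Z"
    and fin: "finite (LB Z)" and s: "s \<in> LB Z"
  shows "s = 0"
proof -
  have sI: "s \<in> {0..<L}" using s Z unfolding LB_def by auto
  have ex1: "\<exists>m. (T^^m) s \<in> S"
  proof (rule ccontr)
    assume H: "\<not> ?thesis"
    have all: "(T^^m) s \<in> LB Z" for m
    proof (induction m)
      case 0 then show ?case using s by simp
    next
      case (Suc m)
      have "T ((T^^m) s) \<in> LB Z" using F.LB_step[OF Z(1-3) Suc] H by blast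
      then show ?case by simp
    qed
    obtain i j where ij: "i < j" "(T^^i) s = (T^^j) s" by (rule finite_orbit_rep[OF fin all])
    have "(T^^j) s = (T^^i) ((T^^(j-i)) s)" using ij by (metis funpow_add add_diff_inverse_nat not_less_iff_gr_or_eq comp_apply)
    then have per: "(T^^(j-i)) s = s" using inj_onD[OF F.Tn_inj[of i]] ij F.Tn_map sI by auto
    have "1 \<le> j - i" using ij by simp
    then show False using noper[OF sI _ per] by simp
  qed
  have ex2: "\<exists>n. (T'^^n) s \<in> S'"
  proof (rule ccontr)
    assume H: "\<not> ?thesis"
    have all: "(T'^^m) s \<in> LB Z" for m
    proof (induction m)
      case 0 then show ?case using s by simp
    next
      case (Suc m)
      have "T' ((T'^^m) s) \<in> LB Z" using B.LB_step[OF Z(1,4,5) Suc] H by blast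
      then show ?case by simp
    qed
    obtain i j where ij: "i < j" "(T'^^i) s = (T'^^j) s" by (rule finite_orbit_rep[OF fin all])
    have "(T'^^j) s = (T'^^i) ((T'^^(j-i)) s)" using ij by (metis funpow_add add_diff_inverse_nat not_less_iff_gr_or_eq comp_apply)
    then have e: "(T'^^(j-i)) s = s" using inj_onD[OF B.Tn_inj[of i]] ij B.Tn_map sI by auto
    have "(T^^(j-i)) s = (T^^(j-i)) ((T'^^(j-i)) s)" using e by simp
    also have "\<dots> = s" using invn2[OF sI] .
    finally have per: "(T^^(j-i)) s = s" .
    have "1 \<le> j - i" using ij by simp
    then show False using noper[OF sI _ per] by simp
  qed
  obtain m where m: "(T^^m) s \<in> S" using ex1 by blast
  obtain n where n: "(T'^^n) s \<in> S'" using ex2 by blast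
  obtain z where z: "z \<in> S" "(T'^^n) s = T z" using n K3 by auto
  have zI: "z \<in> {0..<L}" using z F.Ssub by auto
  have "s = (T^^n) ((T'^^n) s)" using invn2[OF sI] by simp
  also have "\<dots> = (T^^(Suc n)) z" using z by (simp add: funpow_swap1)
  finally have sz: "s = (T^^Suc n) z" .
  have mz: "(T^^m) s = (T^^(Suc (m + n))) z"
  proof -
    have "(T^^(m + Suc n)) z = (T^^m) ((T^^Suc n) z)" by (simp only: funpow_add comp_apply)
    then show ?thesis using sz by simp
  qed
  have T0: "(T^^m) s = 0"
  proof (rule ccontr)
    assume "(T^^m) s \<noteq> 0"
    then show False using K1[OF z(1) m, of "Suc (m+n)"] mz by auto
  qed
  have "T ((T^^(m+n)) z) = T (T' 0)" using mz T0 c0 by simp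
  moreover have "(T^^(m+n)) z \<in> {0..<L}" using F.Tn_map zI by simp
  moreover have "T' 0 \<in> {0..<L}" using c0 F.Ssub by auto
  ultimately have c: "(T^^(m+n)) z = T' 0" using inj_onD[OF F.Tinj] by blast
  have "m + n = 0"
  proof (rule ccontr)
    assume "m + n \<noteq> 0"
    then show False using K1[OF z(1) c0(1) c0(2), of "m+n"] c by auto
  qed
  then show "s = 0" using T0 by simp
qed

theorem dense:
  assumes x: "x \<in> {0..<L}" and pq: "0 \<le> p" "p < q" "q \<le> L"
  shows "\<exists>n. (T^^n) x \<in> {p..<q}"
proof -
  define Q where "Q = {p..<q}"
  define Y where "Y = {y\<in>{0..<L}. \<exists>n. (T^^n) y \<in> Q}"
  define W where "W = {0..<L} - Y"
  have QI: "Q \<subseteq> {0..<L}" using pq unfolding Q_def by auto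
  define PR where "PR a b r \<longleftrightarrow> r \<ge> 1 \<and> (\<forall>j\<le>r. \<exists>c. \<forall>x\<in>{a..<b}. (T'^^j) x = x + c) \<and> (T'^^r) ` {a..<b} \<subseteq> Q
     \<and> (\<forall>j. 1 \<le> j \<longrightarrow> j < r \<longrightarrow> (T'^^j) ` {a..<b} \<inter> Q = {})" for a b r
  obtain P where PP: "finite P \<and> Q = (\<Union>(a,b)\<in>P. {a..<b}) \<and> (\<forall>a b. (a,b)\<in>P \<longrightarrow> p \<le> a \<and> a < b \<and> b \<le> q \<and>
     (\<exists>r. PR a b r))"
    using B.tower[OF pq] unfolding Q_def[symmetric] PR_def by (rule exE)
  have Pfin: "finite P" using PP by (elim conjE)
  have PQ: "Q = (\<Union>(a,b)\<in>P. {a..<b})" using PP by (elim conjE)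
  have Pab: "p \<le> a \<and> a < b \<and> b \<le> q \<and> (\<exists>r. PR a b r)" if "(a,b) \<in> P" for a b
    using PP that by (elim conjE) (erule allE, erule allE, erule impE, assumption)
  define R where "R a b = (SOME r. PR a b r)" for a b
  have RP: "PR a b (R a b)" if "(a,b) \<in> P" for a b
    unfolding R_def using Pab[OF that] by (elim conjE) (rule someI_ex)
  have R1: "R a b \<ge> 1" if "(a,b) \<in> P" for a b using RP[OF that] unfolding PR_def by (elim conjE)
  have Rsub: "(T'^^(R a b)) ` {a..<b} \<subseteq> Q" if "(a,b) \<in> P" for a b using RP[OF that] unfolding PR_def by (elim conjE)
  have Rtr: "\<forall>j\<le>R a b. \<exists>c. \<forall>x\<in>{a..<b}. (T'^^j) x = x + c" if "(a,b) \<in> P" for a b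
    using RP[OF that] unfolding PR_def by (elim conjE)
  have tr: "(T'^^j) x = x + ((T'^^j) a - a)" if abP: "(a,b) \<in> P" and jr: "j \<le> R a b" and xab: "x \<in> {a..<b}" for a b j x
  proof -
    obtain c where c: "\<forall>x\<in>{a..<b}. (T'^^j) x = x + c" using Rtr[OF abP, rule_format, OF jr] by (rule exE)
    have "a \<in> {a..<b}" using Pab[OF abP] by auto
    then have "(T'^^j) a = a + c" using c by (rule bspec[rotated])
    moreover have "(T'^^j) x = x + c" using c xab by (rule bspec)
    ultimately show ?thesis by simp
  qed
  define Ix where "Ix = Sigma P (\<lambda>ab. {..<R (fst ab) (snd ab)})"
  define P2 where "P2 = (\<lambda>(ab,j). ((T'^^j) (fst ab), (T'^^j) (fst ab) + (snd ab - fst ab))) ` Ix"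
  have P2fin: "finite P2" unfolding P2_def Ix_def using Pfin by (intro finite_imageI finite_SigmaI) auto
  have P2lt: "\<forall>a b. (a,b) \<in> P2 \<longrightarrow> a < b" unfolding P2_def Ix_def using Pab by auto
  have Y2: "Y = (\<Union>(a,b)\<in>P2. {a..<b})"
  proof
    show "(\<Union>(a,b)\<in>P2. {a..<b}) \<subseteq> Y"
    proof
      fix y assume "y \<in> (\<Union>(a,b)\<in>P2. {a..<b})"
      then obtain a b j where abj: "(a,b) \<in> P" "j < R a b" "y \<in> {(T'^^j) a..<(T'^^j) a + (b - a)}"
        unfolding P2_def Ix_def by auto
      define x0 where "x0 = a + (y - (T'^^j) a)"
      have x0: "x0 \<in> {a..<b}" using abj unfolding x0_def by auto
      have x0Q: "x0 \<in> Q" using x0 PQ abj(1) by blast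
      have x0I: "x0 \<in> {0..<L}" using x0Q QI by blast
      have "(T'^^j) x0 = y" using tr[OF abj(1) _ x0, of j] abj(2) unfolding x0_def by simp
      then have "(T^^j) y = x0" using invn2 x0I by blast
      moreover have "y \<in> {0..<L}" using \<open>(T'^^j) x0 = y\<close> B.Tn_map x0I by blast
      ultimately show "y \<in> Y" unfolding Y_def using x0Q by blast
    qed
    show "Y \<subseteq> (\<Union>(a,b)\<in>P2. {a..<b})"
    proof
      fix y assume yY: "y \<in> Y"
      then have yI: "y \<in> {0..<L}" unfolding Y_def by auto
      have exn: "\<exists>n. (T^^n) y \<in> Q" using yY unfolding Y_def by auto
      define n where "n = (LEAST n. (T^^n) y \<in> Q)"
      have nQ: "(T^^n) y \<in> Q" unfolding n_def using exn by (rule LeastI_ex)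
      have nmin: "\<And>m. m < n \<Longrightarrow> (T^^m) y \<notin> Q" unfolding n_def using not_less_Least by blast
      obtain a b where ab: "(a,b) \<in> P" "(T^^n) y \<in> {a..<b}" using nQ PQ by auto
      have "n < R a b"
      proof (rule ccontr)
        assume "\<not> n < R a b"
        then have rn: "R a b \<le> n" by simp
        define r where "r = R a b"
        have "(T'^^r) ((T^^n) y) \<in> Q" using Rsub[OF ab(1)] ab(2) unfolding r_def by blast
        moreover have "(T^^n) y = (T^^r) ((T^^(n-r)) y)" using rn unfolding r_def by (metis funpow_add le_add_diff_inverse comp_apply)
        moreover have "(T^^(n-r)) y \<in> {0..<L}" using F.Tn_map yI by blast
        ultimately have "(T^^(n-r)) y \<in> Q" using invn1 by metis
        moreover have "n - r < n" using R1[OF ab(1)] rn unfolding r_def by auto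
        ultimately show False using nmin by blast
      qed
      have "y = (T'^^n) ((T^^n) y)" using invn1 yI by simp
      also have "\<dots> = (T^^n) y + ((T'^^n) a - a)" using tr[OF ab(1) _ ab(2)] \<open>n < R a b\<close> by simp
      finally have ye: "y = (T^^n) y + ((T'^^n) a - a)" .
      have "((a,b),n) \<in> Ix" unfolding Ix_def using ab(1) \<open>n < R a b\<close> by auto
      then have "((T'^^n) a, (T'^^n) a + (b - a)) \<in> P2" unfolding P2_def by force
      moreover have "y \<in> {(T'^^n) a..<(T'^^n) a + (b - a)}" using ye ab(2) by auto
      ultimately show "y \<in> (\<Union>(a,b)\<in>P2. {a..<b})" by blast
    qed
  qed
  have ret: "\<exists>m\<ge>1. (T^^m) z \<in> Q" if "z \<in> Q" for z using F.return[OF pq] that unfolding Q_def by blast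
  have YI: "Y \<subseteq> {0..<L}" unfolding Y_def by auto
  have TY: "\<forall>y\<in>Y. T y \<in> Y"
  proof
    fix y assume y: "y \<in> Y"
    then obtain n where n: "(T^^n) y \<in> Q" and yI: "y \<in> {0..<L}" unfolding Y_def by auto
    have "\<exists>k. (T^^k) (T y) \<in> Q"
    proof (cases n)
      case 0
      then have "y \<in> Q" using n by simp
      then obtain m where m: "m \<ge> 1" "(T^^m) y \<in> Q" using ret by blast
      then have "(T^^(m-1)) (T y) \<in> Q" by (metis Suc_diff_1 funpow_Suc_right comp_apply less_le_trans zero_less_one)
      then show ?thesis by blast
    next
      case (Suc k)
      then have "(T^^k) (T y) \<in> Q" using n by (simp add: funpow_swap1)
      then show ?thesis by blast
    qed
    then show "T y \<in> Y" unfolding Y_def using F.Tmap yI by blast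
  qed
  have TW: "\<forall>y\<in>{0..<L} - Y. T y \<notin> Y"
  proof (intro ballI notI)
    fix y assume y: "y \<in> {0..<L} - Y" and Ty: "T y \<in> Y"
    then obtain k where "(T^^k) (T y) \<in> Q" unfolding Y_def by auto
    then have "(T^^Suc k) y \<in> Q" by (simp add: funpow_swap1)
    then show False using y unfolding Y_def by blast
  qed
  have T'Y: "\<forall>y\<in>Y. T' y \<in> Y"
  proof
    fix y assume y: "y \<in> Y"
    then obtain n where n: "(T^^n) y \<in> Q" and yI: "y \<in> {0..<L}" unfolding Y_def by auto
    have "(T^^Suc n) (T' y) = (T^^n) y" using inv2[OF yI] by (simp add: funpow_swap1)
    then show "T' y \<in> Y" unfolding Y_def using n B.Tmap yI by (metis (mono_tags, lifting) mem_Collect_eq)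
  qed
  have T'W: "\<forall>y\<in>{0..<L} - Y. T' y \<notin> Y"
  proof (intro ballI notI)
    fix y assume y: "y \<in> {0..<L} - Y" and Ty: "T' y \<in> Y"
    then have yI: "y \<in> {0..<L}" by auto
    obtain k where k: "(T^^k) (T' y) \<in> Q" using Ty unfolding Y_def by auto
    have "\<exists>j. (T^^j) y \<in> Q"
    proof (cases k)
      case 0
      then have "T' y \<in> Q" using k by simp
      then obtain m where m: "m \<ge> 1" "(T^^m) (T' y) \<in> Q" using ret by blast
      have "(T^^m) (T' y) = (T^^(m-1)) (T (T' y))" using m(1) by (metis Suc_diff_1 funpow_Suc_right comp_apply less_le_trans zero_less_one)
      then have "(T^^(m-1)) y \<in> Q" using m inv2[OF yI] by simp
      then show ?thesis by blast
    next
      case (Suc j)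
      then have "(T^^j) (T (T' y)) \<in> Q" using k by (simp add: funpow_swap1)
      then show ?thesis using inv2[OF yI] by auto
    qed
    then show False using y unfolding Y_def by blast
  qed
  have pY: "p \<in> Y" unfolding Y_def Q_def using pq by (auto intro!: exI[of _ 0])
  have P2ne: "P2 \<noteq> {}" using pY Y2 by auto
  obtain s where s: "s \<in> LB Y" using LB_ne_union[OF P2fin P2ne Y2 P2lt] by blast
  have LBYfin: "finite (LB Y)" using LB_union_fin[OF Y2] P2fin by (meson finite_imageI finite_insert finite_subset)
  have "s = 0" using key_LB[OF YI TY TW T'Y T'W LBYfin s] .
  then have "0 \<in> Y" using s unfolding LB_def by auto
  have "W = {}"
  proof (rule ccontr)
    assume Wne: "W \<noteq> {}"
    obtain w where w: "w \<in> LB W" using LB_ne_compl[OF Y2 W_def Wne] by blast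
    have LBWfin: "finite (LB W)" using LB_compl_fin[OF P2fin Y2] P2fin unfolding W_def by (meson finite_imageI finite_insert finite_subset)
    have WI: "W \<subseteq> {0..<L}" unfolding W_def by auto
    have c1: "\<forall>z\<in>W. T z \<in> W" using TW F.Tmap unfolding W_def by blast
    have c2: "\<forall>z\<in>{0..<L} - W. T z \<notin> W" using TY unfolding W_def by blast
    have c3: "\<forall>z\<in>W. T' z \<in> W" using T'W B.Tmap unfolding W_def by blast
    have c4: "\<forall>z\<in>{0..<L} - W. T' z \<notin> W" using T'Y unfolding W_def by blast
    have "w = 0" using key_LB[OF WI c1 c2 c3 c4 LBWfin w] .
    then have "0 \<in> W" using w unfolding LB_def by auto
    then show False using \<open>0 \<in> Y\<close> unfolding W_def by auto
  qed
  then have "x \<in> Y" using x unfolding W_def by auto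
  then show ?thesis unfolding Y_def Q_def by auto
qed

end


locale ordA =
  fixes A :: "'a set" and p :: "'a \<Rightarrow> nat" and lam :: "'a \<Rightarrow> real"
  assumes finA: "finite A" and bij: "bij_betw p A {1..card A}" and lpos: "\<forall>a\<in>A. lam a > 0"
begin

abbreviation "off \<equiv> offs A p lam"

lemma pinj: "inj_on p A" using bij bij_betw_def by blast
lemma prange: "a \<in> A \<Longrightarrow> 1 \<le> p a \<and> p a \<le> card A" using bij by (auto simp: bij_betw_def)
lemma psurj: "1 \<le> k \<Longrightarrow> k \<le> card A \<Longrightarrow> \<exists>a\<in>A. p a = k"
  using bij unfolding bij_betw_def by (metis atLeastAtMost_iff imageE)

lemma lam_nonneg: "a \<in> A \<Longrightarrow> 0 \<le> lam a" using lpos by force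

lemma off_nonneg: "0 \<le> off a"
  unfolding offs_def by (rule sum_nonneg) (use lpos in force)

lemma off_ins: "a \<in> A \<Longrightarrow> off a + lam a = sum lam (insert a {c\<in>A. p c < p a})"
  unfolding offs_def using finA by (subst sum.insert) auto

lemma off_mono: assumes "a\<in>A" "b\<in>A" "p a < p b" shows "off a + lam a \<le> off b"
proof -
  have "insert a {c\<in>A. p c < p a} \<subseteq> {c\<in>A. p c < p b}" using assms by auto
  then have "sum lam (insert a {c\<in>A. p c < p a}) \<le> sum lam {c\<in>A. p c < p b}"
    using finA lpos by (intro sum_mono2) (auto intro: less_imp_le)
  then show ?thesis using off_ins[OF assms(1)] unfolding offs_def by simp
qed

lemma off_top: assumes "a\<in>A" shows "off a + lam a \<le> lstar A lam"
proof -
  have "insert a {c\<in>A. p c < p a} \<subseteq> A" using assms by auto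
  then have "sum lam (insert a {c\<in>A. p c < p a}) \<le> sum lam A"
    using finA lpos by (intro sum_mono2) (auto intro: less_imp_le)
  then show ?thesis using off_ins[OF assms(1)] unfolding lstar_def by simp
qed

lemma off_next: assumes "a\<in>A" "b\<in>A" "p b = p a + 1" shows "off b = off a + lam a"
proof -
  have "c \<in> {c\<in>A. p c < p b} \<longleftrightarrow> c \<in> insert a {c\<in>A. p c < p a}" for c
  proof (cases "c \<in> A \<and> p c = p a")
    case True then have "c = a" using pinj assms(1) by (auto dest: inj_onD)
    then show ?thesis using assms by simp
  next
    case False then show ?thesis using assms by auto
  qed
  then have "{c\<in>A. p c < p b} = insert a {c\<in>A. p c < p a}" by (rule set_eqI)
  then show ?thesis using off_ins[OF assms(1)] unfolding offs_def by simp
qed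

lemma off_last: assumes "a\<in>A" "p a = card A" shows "off a + lam a = lstar A lam"
proof -
  have "c \<in> insert a {c\<in>A. p c < p a} \<longleftrightarrow> c \<in> A" for c
  proof (cases "c \<in> A \<and> p c = p a")
    case True then have "c = a" using pinj assms(1) by (auto dest: inj_onD)
    then show ?thesis using assms by simp
  next
    case False
    have "c \<in> A \<Longrightarrow> p c \<le> card A" using prange by blast
    then show ?thesis using assms False by auto
  qed
  then have "insert a {c\<in>A. p c < p a} = A" by (rule set_eqI)
  then show ?thesis using off_ins[OF assms(1)] unfolding lstar_def by simp
qed

lemma off_first: assumes "a\<in>A" "p a = 1" shows "off a = 0"
proof -
  have "{c\<in>A. p c < p a} = {}" using assms prange by force
  then show ?thesis unfolding offs_def by (metis sum.empty)
qed

lemma off_pos: assumes "a\<in>A" "p a \<noteq> 1" shows "off a > 0"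
proof -
  obtain b where b: "b\<in>A" "p b = 1" using psurj[of 1] assms prange by fastforce
  have "p b < p a" using prange[OF assms(1)] assms b by simp
  then have "off b + lam b \<le> off a" using off_mono b assms by blast
  then show ?thesis using lpos b off_nonneg[of b] by force
qed

lemma off_zero_iff: "a\<in>A \<Longrightarrow> off a = 0 \<longleftrightarrow> p a = 1"
  using off_first off_pos by force

lemma off_lt_L: "a\<in>A \<Longrightarrow> off a < lstar A lam"
  using off_top lpos by force

lemma off_inj: assumes "a\<in>A" "b\<in>A" "off a = off b" shows "a = b"
proof (rule ccontr)
  assume "a \<noteq> b"
  then have "p a \<noteq> p b" using pinj assms by (auto simp: inj_on_def)
  then show False using off_mono[OF assms(1,2)] off_mono[OF assms(2,1)] assms lpos
    by (cases "p a < p b") force+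
qed

lemma off_lt_iff: assumes "a\<in>A" "b\<in>A" shows "off a < off b \<longleftrightarrow> p a < p b"
proof
  assume "p a < p b" then show "off a < off b" using off_mono[OF assms] lpos assms by force
next
  assume H: "off a < off b"
  show "p a < p b"
  proof (rule ccontr)
    assume "\<not> p a < p b"
    then have "p b < p a \<or> p a = p b" by auto
    then show False
    proof
      assume "p b < p a" then show False using off_mono[OF assms(2,1)] lpos assms H by force
    next
      assume "p a = p b" then have "a = b" using pinj assms by (auto simp: inj_on_def)
      then show False using H by simp
    qed
  qed
qed

lemma uniq: assumes "a\<in>A" "b\<in>A" "off a \<le> x" "x < off a + lam a" "off b \<le> x" "x < off b + lam b"
  shows "a = b"
proof (rule ccontr)
  assume "a \<noteq> b"
  then have "p a \<noteq> p b" using pinj assms by (auto simp: inj_on_def)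
  then show False using off_mono[OF assms(1,2)] off_mono[OF assms(2,1)] assms
    by (cases "p a < p b") force+
qed

lemma uniq_left: assumes "a\<in>A" "b\<in>A" "off a < x" "x \<le> off a + lam a" "off b < x" "x \<le> off b + lam b"
  shows "a = b"
proof (rule ccontr)
  assume "a \<noteq> b"
  then have "p a \<noteq> p b" using pinj assms by (auto simp: inj_on_def)
  then show False using off_mono[OF assms(1,2)] off_mono[OF assms(2,1)] assms
    by (cases "p a < p b") force+
qed

lemma cover: assumes "0 \<le> x" "x < lstar A lam" shows "\<exists>a\<in>A. off a \<le> x \<and> x < off a + lam a"
proof -
  define B where "B = {a\<in>A. off a \<le> x}"
  have "A \<noteq> {}" using assms unfolding lstar_def by auto
  then have "card A \<ge> 1" using finA by (simp add: Suc_leI card_gt_0_iff)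
  then obtain a0 where "a0\<in>A" "p a0 = 1" using psurj by blast
  then have "a0 \<in> B" using off_first assms B_def by auto
  have fB: "finite B" using finA B_def by auto
  define m where "m = Max (p ` B)"
  have "m \<in> p ` B" unfolding m_def using fB \<open>a0\<in>B\<close> by (intro Max_in) auto
  then obtain a where a: "a \<in> B" "p a = m" by auto
  have amax: "\<And>b. b \<in> B \<Longrightarrow> p b \<le> p a" using a fB m_def by auto
  have "x < off a + lam a"
  proof (rule ccontr)
    assume H: "\<not> x < off a + lam a"
    show False
    proof (cases "p a = card A")
      case True then show False using off_last[of a] a H B_def assms by auto
    next
      case False
      then have "p a + 1 \<le> card A" using prange[of a] a B_def by auto
      then obtain b where b: "b\<in>A" "p b = p a + 1" using psurj[of "p a + 1"] by auto
      then have "off b = off a + lam a" using off_next a B_def by auto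
      then have "b \<in> B" using b H B_def by auto
      then show False using amax b by fastforce
    qed
  qed
  then show ?thesis using a B_def by auto
qed

lemma cover_left: assumes "0 < x" "x \<le> lstar A lam" shows "\<exists>a\<in>A. off a < x \<and> x \<le> off a + lam a"
proof -
  define B where "B = {a\<in>A. off a < x}"
  have "A \<noteq> {}" using assms unfolding lstar_def by auto
  then have "card A \<ge> 1" using finA by (simp add: Suc_leI card_gt_0_iff)
  then obtain a0 where "a0\<in>A" "p a0 = 1" using psurj by blast
  then have "a0 \<in> B" using off_first assms B_def by auto
  have fB: "finite B" using finA B_def by auto
  define m where "m = Max (p ` B)"
  have "m \<in> p ` B" unfolding m_def using fB \<open>a0\<in>B\<close> by (intro Max_in) auto
  then obtain a where a: "a \<in> B" "p a = m" by auto
  have amax: "\<And>b. b \<in> B \<Longrightarrow> p b \<le> p a" using a fB m_def by auto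
  have "x \<le> off a + lam a"
  proof (rule ccontr)
    assume H: "\<not> x \<le> off a + lam a"
    show False
    proof (cases "p a = card A")
      case True then show False using off_last[of a] a H B_def assms by auto
    next
      case False
      then have "p a + 1 \<le> card A" using prange[of a] a B_def by auto
      then obtain b where b: "b\<in>A" "p b = p a + 1" using psurj[of "p a + 1"] by auto
      then have "off b = off a + lam a" using off_next a B_def by auto
      then have "b \<in> B" using b H B_def by auto
      then show False using amax b by fastforce
    qed
  qed
  then show ?thesis using a B_def by auto
qed

definition pc :: "real \<Rightarrow> 'a" where
  "pc x = (THE a. a\<in>A \<and> off a \<le> x \<and> x < off a + lam a)"
definition pcl :: "real \<Rightarrow> 'a" where
  "pcl x = (THE a. a\<in>A \<and> off a < x \<and> x \<le> off a + lam a)"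

lemma pc: assumes "0 \<le> x" "x < lstar A lam"
  shows "pc x \<in> A" "off (pc x) \<le> x" "x < off (pc x) + lam (pc x)"
proof -
  have "\<exists>!a. a\<in>A \<and> off a \<le> x \<and> x < off a + lam a" using cover[OF assms] uniq by blast
  then have "pc x\<in>A \<and> off (pc x) \<le> x \<and> x < off (pc x) + lam (pc x)"
    unfolding pc_def by (rule theI')
  then show "pc x \<in> A" "off (pc x) \<le> x" "x < off (pc x) + lam (pc x)" by auto
qed

lemma pc_eq: assumes "a\<in>A" "off a \<le> x" "x < off a + lam a" shows "pc x = a"
proof -
  have "0 \<le> x" "x < lstar A lam" using assms off_nonneg[of a] off_top[of a] by auto
  then show ?thesis using pc[of x] uniq[of a "pc x" x] assms by auto
qed

lemma pcl: assumes "0 < x" "x \<le> lstar A lam"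
  shows "pcl x \<in> A" "off (pcl x) < x" "x \<le> off (pcl x) + lam (pcl x)"
proof -
  have "\<exists>!a. a\<in>A \<and> off a < x \<and> x \<le> off a + lam a" using cover_left[OF assms] uniq_left by blast
  then have "pcl x\<in>A \<and> off (pcl x) < x \<and> x \<le> off (pcl x) + lam (pcl x)"
    unfolding pcl_def by (rule theI')
  then show "pcl x \<in> A" "off (pcl x) < x" "x \<le> off (pcl x) + lam (pcl x)" by auto
qed

lemma pcl_eq: assumes "a\<in>A" "off a < x" "x \<le> off a + lam a" shows "pcl x = a"
proof -
  have "0 < x" "x \<le> lstar A lam" using assms off_nonneg[of a] off_top[of a] by auto
  then show ?thesis using pcl[of x] uniq_left[of a "pcl x" x] assms by auto
qed


lemma jinj: "inj_on (jmap A p lam) (Idisj A lam)"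
proof (rule inj_onI)
  fix u v assume u: "u \<in> Idisj A lam" and v: "v \<in> Idisj A lam" and e: "jmap A p lam u = jmap A p lam v"
  obtain x a where xa: "u = (x,a)" "a\<in>A" "0 \<le> x" "x < lam a" using u unfolding Idisj_def by auto
  obtain y b where yb: "v = (y,b)" "b\<in>A" "0 \<le> y" "y < lam b" using v unfolding Idisj_def by auto
  have e2: "x + off a = y + off b" using e xa yb unfolding jmap_def by simp
  have "off a \<le> x + off a" "x + off a < off a + lam a" "off b \<le> x + off a" "x + off a < off b + lam b"
    using xa yb e2 by auto
  then have "a = b" using uniq[of a b "x + off a"] xa(2) yb(2) by blast
  then show "u = v" using xa yb e2 by simp
qed

lemma jinv: assumes "a\<in>A" "off a \<le> x" "x < off a + lam a"
  shows "inv_into (Idisj A lam) (jmap A p lam) x = (x - off a, a)"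
proof -
  have "(x - off a, a) \<in> Idisj A lam" using assms unfolding Idisj_def by auto
  moreover have "jmap A p lam (x - off a, a) = x" unfolding jmap_def by simp
  ultimately show ?thesis using inv_into_f_eq[OF jinj] by blast
qed

lemma same_piece: assumes "a\<in>A" "off a \<le> x" "x \<le> y" "y < lstar A lam"
  "\<forall>b\<in>A. \<not> (x < off b \<and> off b \<le> y)" "x < off a + lam a"
  shows "y < off a + lam a"
proof (rule ccontr)
  assume H: "\<not> y < off a + lam a"
  show False
  proof (cases "p a = card A")
    case True then show False using off_last[OF assms(1) True] assms(4) H by linarith
  next
    case False
    then have "p a + 1 \<le> card A" using prange[OF assms(1)] by auto
    then obtain b where b: "b\<in>A" "p b = p a + 1" using psurj[of "p a + 1"] by auto
    then have "off b = off a + lam a" using off_next[OF assms(1)] by blast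
    have "x < off b" using \<open>off b = off a + lam a\<close> assms(6) by simp
    moreover have "off b \<le> y" using \<open>off b = off a + lam a\<close> H by simp
    ultimately show False using assms(5) b(1) by blast
  qed
qed

end


locale ied =
  fixes A :: "'a set" and p0 p1 :: "'a \<Rightarrow> nat" and lam :: "'a \<Rightarrow> real"
  assumes ied: "ie_data A p0 p1 lam"
begin

sublocale o0: ordA A p0 lam using ied unfolding ie_data_def by unfold_locales auto
sublocale o1: ordA A p1 lam using ied unfolding ie_data_def by unfold_locales auto

abbreviation "L \<equiv> lstar A lam"
abbreviation "T \<equiv> iet A p0 p1 lam"
abbreviation "T' \<equiv> iet A p1 p0 lam"
abbreviation "II \<equiv> {0..<lstar A lam}"

definition sh :: "'a \<Rightarrow> real" where "sh a = o1.off a - o0.off a"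

lemma finA: "finite A" using o0.finA .

lemma T_eq: assumes "a\<in>A" "o0.off a \<le> x" "x < o0.off a + lam a" shows "T x = x + sh a"
proof -
  have "inv_into (Idisj A lam) (jmap A p0 lam) x = (x - o0.off a, a)" using o0.jinv assms .
  then show ?thesis unfolding iet_def comp_def by (simp add: jmap_def sh_def)
qed

lemma T'_eq: assumes "a\<in>A" "o1.off a \<le> x" "x < o1.off a + lam a" shows "T' x = x - sh a"
proof -
  have "inv_into (Idisj A lam) (jmap A p1 lam) x = (x - o1.off a, a)" using o1.jinv assms .
  then show ?thesis unfolding iet_def comp_def by (simp add: jmap_def sh_def)
qed

lemma T_pc: "x \<in> II \<Longrightarrow> T x = x + sh (o0.pc x)"
  using T_eq o0.pc by auto

lemma T_in: assumes "x \<in> II" shows "T x \<in> II"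
proof -
  let ?a = "o0.pc x"
  have "?a \<in> A" "o0.off ?a \<le> x" "x < o0.off ?a + lam ?a" using o0.pc assms by auto
  then show ?thesis using T_eq[of ?a x] o1.off_nonneg[of ?a] o1.off_top[of ?a] unfolding sh_def by auto
qed

lemma T'_in: assumes "x \<in> II" shows "T' x \<in> II"
proof -
  let ?a = "o1.pc x"
  have "?a \<in> A" "o1.off ?a \<le> x" "x < o1.off ?a + lam ?a" using o1.pc assms by auto
  then show ?thesis using T'_eq[of ?a x] o0.off_nonneg[of ?a] o0.off_top[of ?a] unfolding sh_def by auto
qed

lemma T'_T: assumes "x \<in> II" shows "T' (T x) = x"
proof -
  let ?a = "o0.pc x"
  have a: "?a \<in> A" "o0.off ?a \<le> x" "x < o0.off ?a + lam ?a" using o0.pc assms by auto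
  then have "T x = x + sh ?a" using T_eq by blast
  moreover have "o1.off ?a \<le> x + sh ?a" "x + sh ?a < o1.off ?a + lam ?a" using a unfolding sh_def by auto
  ultimately show ?thesis using T'_eq[of ?a "x + sh ?a"] a by simp
qed

lemma T_T': assumes "x \<in> II" shows "T (T' x) = x"
proof -
  let ?a = "o1.pc x"
  have a: "?a \<in> A" "o1.off ?a \<le> x" "x < o1.off ?a + lam ?a" using o1.pc assms by auto
  then have "T' x = x - sh ?a" using T'_eq by blast
  moreover have "o0.off ?a \<le> x - sh ?a" "x - sh ?a < o0.off ?a + lam ?a" using a unfolding sh_def by auto
  ultimately show ?thesis using T_eq[of ?a "x - sh ?a"] a by simp
qed

lemma T_inj: "inj_on T II"
proof (rule inj_onI)
  fix x y assume x: "x \<in> II" and y: "y \<in> II" and e: "T x = T y"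
  have "T' (T x) = T' (T y)" using e by simp
  then show "x = y" using T'_T[OF x] T'_T[OF y] by simp
qed
lemma T'_inj: "inj_on T' II"
proof (rule inj_onI)
  fix x y assume x: "x \<in> II" and y: "y \<in> II" and e: "T' x = T' y"
  have "T (T' x) = T (T' y)" using e by simp
  then show "x = y" using T_T'[OF x] T_T'[OF y] by simp
qed
lemma T_img: "T ` II = II"
proof
  show "T ` II \<subseteq> II" using T_in by (rule image_subsetI)
  show "II \<subseteq> T ` II"
  proof
    fix x assume x: "x \<in> II"
    have "x = T (T' x)" using T_T'[OF x] by simp
    then show "x \<in> T ` II" using T'_in[OF x] by (rule image_eqI)
  qed
qed
lemma T'_img: "T' ` II = II"
proof
  show "T' ` II \<subseteq> II" using T'_in by (rule image_subsetI)
  show "II \<subseteq> T' ` II"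
  proof
    fix x assume x: "x \<in> II"
    have "x = T' (T x)" using T'_T[OF x] by simp
    then show "x \<in> T' ` II" using T_in[OF x] by (rule image_eqI)
  qed
qed

lemma invT: "x \<in> II \<Longrightarrow> inv_into II T x = T' x"
  by (rule inv_into_f_eq[OF T_inj T'_in T_T'])
lemma invT': "x \<in> II \<Longrightarrow> inv_into II T' x = T x"
  by (rule inv_into_f_eq[OF T'_inj T_in T'_T])

lemma Tn_in: "x \<in> II \<Longrightarrow> (T^^n) x \<in> II"
proof (induction n)
  case 0 then show ?case by simp
next
  case (Suc n) then show ?case using T_in[of "(T^^n) x"] by simp
qed
lemma T'n_in: "x \<in> II \<Longrightarrow> (T'^^n) x \<in> II"
proof (induction n)
  case 0 then show ?case by simp
next
  case (Suc n) then show ?case using T'_in[of "(T'^^n) x"] by simp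
qed

lemma T'n_Tn: "x \<in> II \<Longrightarrow> (T'^^n) ((T^^n) x) = x"
proof (induction n arbitrary: x)
  case 0 then show ?case by simp
next
  case (Suc n)
  have "(T'^^Suc n) ((T^^Suc n) x) = (T'^^n) (T' (T ((T^^n) x)))"
    by (simp add: funpow_swap1) 
  also have "\<dots> = (T'^^n) ((T^^n) x)" using T'_T Tn_in Suc.prems by simp
  finally show ?case using Suc by simp
qed

lemma Tn_T'n: "x \<in> II \<Longrightarrow> (T^^n) ((T'^^n) x) = x"
proof (induction n arbitrary: x)
  case 0 then show ?case by simp
next
  case (Suc n)
  have "(T^^Suc n) ((T'^^Suc n) x) = (T^^n) (T (T' ((T'^^n) x)))"
    by (simp add: funpow_swap1)
  also have "\<dots> = (T^^n) ((T'^^n) x)" using T_T' T'n_in Suc.prems by simp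
  finally show ?case using Suc by simp
qed

lemma Tn_inj: "inj_on (T^^n) II"
proof (rule inj_onI)
  fix x y assume x: "x \<in> II" and y: "y \<in> II" and e: "(T^^n) x = (T^^n) y"
  have "(T'^^n) ((T^^n) x) = (T'^^n) ((T^^n) y)" using e by simp
  then show "x = y" using T'n_Tn[OF x] T'n_Tn[OF y] by simp
qed

lemma T_trans: assumes "0 \<le> x" "x \<le> y" "y < L" "\<forall>b\<in>A. \<not> (x < o0.off b \<and> o0.off b \<le> y)"
  shows "T y = T x + (y - x)"
proof -
  let ?a = "o0.pc x"
  have a: "?a \<in> A" "o0.off ?a \<le> x" "x < o0.off ?a + lam ?a" using o0.pc assms by auto
  have "y < o0.off ?a + lam ?a" using o0.same_piece[OF a(1,2) assms(2,3,4) a(3)] .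
  then show ?thesis using T_eq[of ?a x] T_eq[of ?a y] a assms by simp
qed

lemma T'_trans: assumes "0 \<le> x" "x \<le> y" "y < L" "\<forall>b\<in>A. \<not> (x < o1.off b \<and> o1.off b \<le> y)"
  shows "T' y = T' x + (y - x)"
proof -
  let ?a = "o1.pc x"
  have a: "?a \<in> A" "o1.off ?a \<le> x" "x < o1.off ?a + lam ?a" using o1.pc assms by auto
  have "y < o1.off ?a + lam ?a" using o1.same_piece[OF a(1,2) assms(2,3,4) a(3)] .
  then show ?thesis using T'_eq[of ?a x] T'_eq[of ?a y] a assms by simp
qed

lemma T_off: "a \<in> A \<Longrightarrow> T (o0.off a) = o1.off a"
  using T_eq[of a "o0.off a"] o0.lpos unfolding sh_def by auto
lemma T'_off: "a \<in> A \<Longrightarrow> T' (o1.off a) = o0.off a"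
  using T'_eq[of a "o1.off a"] o0.lpos unfolding sh_def by auto

definition Tl :: "real \<Rightarrow> real" where "Tl y = y + sh (o0.pcl y)"
definition Tl' :: "real \<Rightarrow> real" where "Tl' y = y - sh (o1.pcl y)"

lemma Tl_eq: "a\<in>A \<Longrightarrow> o0.off a < y \<Longrightarrow> y \<le> o0.off a + lam a \<Longrightarrow> Tl y = y + sh a"
  unfolding Tl_def using o0.pcl_eq by simp
lemma Tl'_eq: "a\<in>A \<Longrightarrow> o1.off a < y \<Longrightarrow> y \<le> o1.off a + lam a \<Longrightarrow> Tl' y = y - sh a"
  unfolding Tl'_def using o1.pcl_eq by simp

lemma Tl_in: assumes "0 < y" "y \<le> L" shows "0 < Tl y \<and> Tl y \<le> L"
proof -
  let ?a = "o0.pcl y"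
  have "?a \<in> A" "o0.off ?a < y" "y \<le> o0.off ?a + lam ?a" using o0.pcl assms by auto
  then show ?thesis using Tl_eq[of ?a y] o1.off_nonneg[of ?a] o1.off_top[of ?a] unfolding sh_def by auto
qed

lemma Tl'_Tl: assumes "0 < y" "y \<le> L" shows "Tl' (Tl y) = y"
proof -
  let ?a = "o0.pcl y"
  have a: "?a \<in> A" "o0.off ?a < y" "y \<le> o0.off ?a + lam ?a" using o0.pcl assms by auto
  then have "Tl y = y + sh ?a" using Tl_eq by blast
  moreover have "o1.off ?a < y + sh ?a" "y + sh ?a \<le> o1.off ?a + lam ?a" using a unfolding sh_def by auto
  ultimately show ?thesis using Tl'_eq[of ?a "y + sh ?a"] a by simp
qed

lemma Tl_Tl': assumes "0 < y" "y \<le> L" shows "Tl (Tl' y) = y"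
proof -
  let ?a = "o1.pcl y"
  have a: "?a \<in> A" "o1.off ?a < y" "y \<le> o1.off ?a + lam ?a" using o1.pcl assms by auto
  then have "Tl' y = y - sh ?a" using Tl'_eq by blast
  moreover have "o0.off ?a < y - sh ?a" "y - sh ?a \<le> o0.off ?a + lam ?a" using a unfolding sh_def by auto
  ultimately show ?thesis using Tl_eq[of ?a "y - sh ?a"] a by simp
qed

lemma Tl_T: assumes "0 < y" "y < L" "y \<notin> o0.off ` A" shows "Tl y = T y"
proof -
  let ?a = "o0.pc y"
  have a: "?a \<in> A" "o0.off ?a \<le> y" "y < o0.off ?a + lam ?a" using o0.pc assms by auto
  have "o0.off ?a < y" using a assms by (metis image_eqI order_le_less)
  then show ?thesis using Tl_eq[of ?a y] T_eq[of ?a y] a by simp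
qed

end


locale iek = ied A p0 p1 lam for A :: "'a set" and p0 p1 lam +
  assumes card2: "card A \<ge> 2" and adm: "admissible A p0 p1" and kea: "keane A p0 p1 lam"
begin

abbreviation "S0 \<equiv> o0.off ` A"
abbreviation "S1 \<equiv> o1.off ` A"

lemma Ane: "A \<noteq> {}" using card2 by auto

lemma Lpos: "0 < L"
  unfolding lstar_def using Ane finA o0.lpos by (intro sum_pos) auto

lemma a0ex: "\<exists>a\<in>A. p0 a = 1" using o0.psurj card2 by auto
lemma a1ex: "\<exists>a\<in>A. p1 a = 1" using o1.psurj card2 by auto

lemma S0_0: "0 \<in> S0" using a0ex o0.off_first by force
lemma S1_0: "0 \<in> S1" using a1ex o1.off_first by force

lemma S0sub: "S0 \<subseteq> II" using o0.off_nonneg o0.off_lt_L by auto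
lemma S1sub: "S1 \<subseteq> II" using o1.off_nonneg o1.off_lt_L by auto

lemma ptmT: "ptm T L S0"
proof
  show "0 < L" by (rule Lpos)
  show "finite S0" using finA by simp
  show "0 \<in> S0" by (rule S0_0)
  show "S0 \<subseteq> II" by (rule S0sub)
  show "\<And>x. x \<in> II \<Longrightarrow> T x \<in> II" by (rule T_in)
  show "inj_on T II" by (rule T_inj)
  show "\<And>x y. 0 \<le> x \<Longrightarrow> x \<le> y \<Longrightarrow> y < L \<Longrightarrow> (\<forall>s\<in>S0. \<not> (x < s \<and> s \<le> y)) \<Longrightarrow> T y = T x + (y - x)"
    using T_trans by blast
qed

lemma ptmT': "ptm T' L S1"
proof
  show "0 < L" by (rule Lpos)
  show "finite S1" using finA by simp
  show "0 \<in> S1" by (rule S1_0)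
  show "S1 \<subseteq> II" by (rule S1sub)
  show "\<And>x. x \<in> II \<Longrightarrow> T' x \<in> II" by (rule T'_in)
  show "inj_on T' II" by (rule T'_inj)
  show "\<And>x y. 0 \<le> x \<Longrightarrow> x \<le> y \<Longrightarrow> y < L \<Longrightarrow> (\<forall>s\<in>S1. \<not> (x < s \<and> s \<le> y)) \<Longrightarrow> T' y = T' x + (y - x)"
    using T'_trans by blast
qed

lemma keaD: "a \<in> A \<Longrightarrow> b \<in> A \<Longrightarrow> p0 b > 1 \<Longrightarrow> m \<ge> 1 \<Longrightarrow> (T^^m) (o0.off a) \<noteq> o0.off b"
  using kea unfolding keane_def jmap_def by auto

lemma K1: "z \<in> S0 \<Longrightarrow> s \<in> S0 \<Longrightarrow> s \<noteq> 0 \<Longrightarrow> 1 \<le> m \<Longrightarrow> (T^^m) z \<noteq> s"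
proof -
  assume z: "z \<in> S0" and s: "s \<in> S0" "s \<noteq> 0" and m: "1 \<le> m"
  obtain a where a: "a\<in>A" "z = o0.off a" using z by auto
  obtain b where b: "b\<in>A" "s = o0.off b" using s by auto
  have "p0 b \<noteq> 1" using b s o0.off_first by auto
  then have "p0 b > 1" using o0.prange[OF b(1)] by auto
  then show "(T^^m) z \<noteq> s" using keaD[OF a(1) b(1) _ m] a b by simp
qed

lemma a0_p1: assumes "a \<in> A" "p0 a = 1" shows "p1 a \<noteq> 1"
proof
  assume h: "p1 a = 1"
  have "1 < card A" using card2 by simp
  then have "{c\<in>A. p0 c \<in> {1..1}} \<noteq> {c\<in>A. p1 c \<in> {1..1}}"
    using adm[unfolded admissible_def, rule_format, of 1] by simp
  moreover have "{c\<in>A. p0 c \<in> {1..1}} = {a}" using assms o0.pinj unfolding inj_on_def by auto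
  moreover have "{c\<in>A. p1 c \<in> {1..1}} = {a}" using assms h o1.pinj unfolding inj_on_def by auto
  ultimately show False by simp
qed

lemma K2: "T 0 \<noteq> 0"
proof -
  obtain a where a: "a\<in>A" "p0 a = 1" using a0ex by blast
  then have "o0.off a = 0" using o0.off_first by simp
  then have "T 0 = o1.off a" using T_off[OF a(1)] by simp
  moreover have "o1.off a \<noteq> 0" using a0_p1[OF a] o1.off_zero_iff[OF a(1)] by simp
  ultimately show ?thesis by simp
qed

lemma K3: "S1 = T ` S0"
  using T_off by (auto simp: image_image)

lemma ptm2T: "ptm2 T T' L S0 S1"
  unfolding ptm2_def ptm2_axioms_def
  using ptmT ptmT' T'_T T_T' K1 K2 K3 by blast

theorem T_dense: "x \<in> II \<Longrightarrow> 0 \<le> p \<Longrightarrow> p < q \<Longrightarrow> q \<le> L \<Longrightarrow> \<exists>n. (T^^n) x \<in> {p..<q}"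
  using ptm2.dense[OF ptm2T] by blast

end


context ied
begin

abbreviation "mu \<equiv> muS A p0 p1 lam"
abbreviation "DD0 \<equiv> D0 A p0 p1 lam"
abbreviation "DD1 \<equiv> D1 A p0 p1 lam"
abbreviation "ip \<equiv> iplus A p0 p1 lam"
abbreviation "im \<equiv> iminus A p0 p1 lam"

definition Dall :: "real set" where "Dall = (\<Union>n. DD0 n \<union> DD1 n)"

lemma invTn: "x \<in> II \<Longrightarrow> (inv_into II T ^^ n) x = (T'^^n) x"
proof (induction n)
  case 0 then show ?case by simp
next
  case (Suc n)
  then show ?case using invT[OF T'n_in[OF Suc.prems, of n]] by simp
qed

lemma D0_eq: "DD0 n = (\<lambda>a. (T'^^n) (o0.off a)) ` {a\<in>A. 1 < p0 a}"
proof -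
  have e: "(inv_into II T ^^ n) (jmap A p0 lam (0, a)) = (T'^^n) (o0.off a)" if "a \<in> A" for a
  proof -
    have "o0.off a \<in> II" using o0.off_nonneg o0.off_lt_L that by auto
    then show ?thesis using invTn unfolding jmap_def by simp
  qed
  show ?thesis unfolding D0_def Iint_def
  proof (rule set_eqI)
    fix y show "y \<in> {(inv_into II T ^^ n) (jmap A p0 lam (0, a)) |a. a \<in> A \<and> 1 < p0 a}
        \<longleftrightarrow> y \<in> (\<lambda>a. (T'^^n) (o0.off a)) ` {a\<in>A. 1 < p0 a}"
    proof
      assume "y \<in> {(inv_into II T ^^ n) (jmap A p0 lam (0, a)) |a. a \<in> A \<and> 1 < p0 a}"
      then obtain a where a: "a \<in> A" "1 < p0 a" "y = (inv_into II T ^^ n) (jmap A p0 lam (0, a))" by blast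
      then show "y \<in> (\<lambda>a. (T'^^n) (o0.off a)) ` {a\<in>A. 1 < p0 a}" using e[of a] by auto
    next
      assume "y \<in> (\<lambda>a. (T'^^n) (o0.off a)) ` {a\<in>A. 1 < p0 a}"
      then obtain a where a: "a \<in> A" "1 < p0 a" "y = (T'^^n) (o0.off a)" by blast
      then have "y = (inv_into II T ^^ n) (jmap A p0 lam (0, a)) \<and> a \<in> A \<and> 1 < p0 a" using e[of a] by simp
      then show "y \<in> {(inv_into II T ^^ n) (jmap A p0 lam (0, a)) |a. a \<in> A \<and> 1 < p0 a}" by blast
    qed
  qed
qed

lemma D1_eq: "DD1 n = (\<lambda>a. (T^^n) (o1.off a)) ` {a\<in>A. 1 < p1 a}"
  unfolding D1_def jmap_def by (auto simp: image_iff)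

lemma D0_fin: "finite (DD0 n)" unfolding D0_eq by (rule finite_imageI, rule finite_subset[OF _ finA]) auto
lemma D1_fin: "finite (DD1 n)" unfolding D1_eq by (rule finite_imageI, rule finite_subset[OF _ finA]) auto
lemma D0_card: "card (DD0 n) \<le> card A"
proof -
  have s: "{a\<in>A. 1 < p0 a} \<subseteq> A" by auto
  show ?thesis unfolding D0_eq
    using card_image_le[OF finite_subset[OF s finA]] card_mono[OF finA s] by (rule order.trans)
qed
lemma D1_card: "card (DD1 n) \<le> card A"
proof -
  have s: "{a\<in>A. 1 < p1 a} \<subseteq> A" by auto
  show ?thesis unfolding D1_eq
    using card_image_le[OF finite_subset[OF s finA]] card_mono[OF finA s] by (rule order.trans)
qed
lemma D0_sub: "DD0 n \<subseteq> II"
  unfolding D0_eq using T'n_in o0.off_nonneg o0.off_lt_L by auto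
lemma D1_sub: "DD1 n \<subseteq> II"
  unfolding D1_eq using Tn_in o1.off_nonneg o1.off_lt_L by auto
lemma Dall_sub: "Dall \<subseteq> II" unfolding Dall_def using D0_sub D1_sub by blast

definition wt :: "real set \<Rightarrow> nat \<Rightarrow> real" where
  "wt S n = (1/2)^n * (real (card (DD0 n \<inter> S)) + real (card (DD1 n \<inter> S)))"

lemma mu_def': "mu S = suminf (wt S)" unfolding muS_def wt_def ..

lemma wt_nonneg: "0 \<le> wt S n" unfolding wt_def by simp

lemma wt_le: "wt S n \<le> 2 * real (card A) * (1/2)^n"
proof -
  have "card (DD0 n \<inter> S) \<le> card A" using D0_card card_mono[OF D0_fin, of "DD0 n \<inter> S"] by (meson inf_le1 order_trans)
  moreover have "card (DD1 n \<inter> S) \<le> card A" using D1_card card_mono[OF D1_fin, of "DD1 n \<inter> S"] by (meson inf_le1 order_trans)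
  ultimately have "real (card (DD0 n \<inter> S)) + real (card (DD1 n \<inter> S)) \<le> 2 * real (card A)" by linarith
  then show ?thesis unfolding wt_def by (simp add: mult.commute mult_left_mono)
qed

lemma summable_g: "summable (\<lambda>n. 2 * real (card A) * (1/2::real)^n)"
  by (intro summable_mult summable_geometric) simp

lemma wt_summable: "summable (wt S)"
  by (rule summable_comparison_test[OF _ summable_g]) (use wt_le wt_nonneg in auto)

lemma mu_nonneg: "0 \<le> mu S" unfolding mu_def' using wt_summable wt_nonneg by (rule suminf_nonneg)

lemma mu_mono: "S \<subseteq> S' \<Longrightarrow> mu S \<le> mu S'"
  unfolding mu_def'
proof (rule suminf_le[OF _ wt_summable wt_summable])
  fix n assume "S \<subseteq> S'"
  have "card (DD0 n \<inter> S) \<le> card (DD0 n \<inter> S')" using \<open>S \<subseteq> S'\<close> D0_fin by (intro card_mono) auto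
  moreover have "card (DD1 n \<inter> S) \<le> card (DD1 n \<inter> S')" using \<open>S \<subseteq> S'\<close> D1_fin by (intro card_mono) auto
  ultimately show "wt S n \<le> wt S' n" unfolding wt_def by (intro mult_left_mono) auto
qed

lemma mu_add: assumes "S \<inter> S' = {}" shows "mu (S \<union> S') = mu S + mu S'"
proof -
  have "wt (S \<union> S') n = wt S n + wt S' n" for n
  proof -
    have "card (DD0 n \<inter> (S \<union> S')) = card (DD0 n \<inter> S) + card (DD0 n \<inter> S')"
      using assms D0_fin by (subst card_Un_disjoint[symmetric]) (auto simp: Int_Un_distrib)
    moreover have "card (DD1 n \<inter> (S \<union> S')) = card (DD1 n \<inter> S) + card (DD1 n \<inter> S')"
      using assms D1_fin by (subst card_Un_disjoint[symmetric]) (auto simp: Int_Un_distrib)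
    ultimately show ?thesis unfolding wt_def by (simp add: algebra_simps)
  qed
  then have e: "wt (S \<union> S') = (\<lambda>n. wt S n + wt S' n)" by (rule ext)
  show ?thesis unfolding mu_def' e by (rule suminf_add[OF wt_summable wt_summable, symmetric])
qed

lemma mu_single_pos: assumes "y \<in> Dall" shows "0 < mu {y}"
proof -
  obtain n where n: "y \<in> DD0 n \<or> y \<in> DD1 n" using assms unfolding Dall_def by auto
  have "0 < wt {y} n"
  proof -
    have "card (DD0 n \<inter> {y}) + card (DD1 n \<inter> {y}) > 0" using n by auto
    then have c: "0 < real (card (DD0 n \<inter> {y})) + real (card (DD1 n \<inter> {y}))" by linarith
    show ?thesis unfolding wt_def using c by (intro mult_pos_pos) auto
  qed
  then show ?thesis unfolding mu_def' using suminf_pos2[OF wt_summable wt_nonneg] by blast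
qed

lemma mu_single_zero: assumes "y \<notin> Dall" shows "mu {y} = 0"
proof -
  have "wt {y} n = 0" for n using assms unfolding wt_def Dall_def by auto
  then have "wt {y} = (\<lambda>n. 0)" by (rule ext)
  then show ?thesis unfolding mu_def' by simp
qed

lemma mu_tail:
  assumes "\<forall>n<N. S \<inter> (DD0 n \<union> DD1 n) = {}"
  shows "mu S \<le> 4 * real (card A) * (1/2)^N"
proof -
  have z: "wt S n = 0" if "n < N" for n
  proof -
    have "DD0 n \<inter> S = {}" "DD1 n \<inter> S = {}" using assms that by auto
    then show ?thesis unfolding wt_def by simp
  qed
  have "mu S = (\<Sum>n. wt S (n + N)) + (\<Sum>i<N. wt S i)" unfolding mu_def'
    by (rule suminf_split_initial_segment[OF wt_summable])
  also have "(\<Sum>i<N. wt S i) = 0" using z by simp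
  also have "(\<Sum>n. wt S (n + N)) \<le> (\<Sum>n. (2 * real (card A) * (1/2)^N) * (1/2)^n)"
  proof (rule suminf_le)
    show "wt S (n + N) \<le> 2 * real (card A) * (1/2)^N * (1/2)^n" for n
      using wt_le[of S "n+N"] by (simp add: power_add mult_ac)
    show "summable (\<lambda>n. wt S (n + N))" using wt_summable by (simp add: summable_iff_shift)
    show "summable (\<lambda>n. 2 * real (card A) * (1/2)^N * (1/2::real)^n)" by (intro summable_mult summable_geometric) simp
  qed
  also have "\<dots> = 2 * real (card A) * (1/2)^N * 2"
    using suminf_mult[OF summable_geometric[of "1/2::real"]] suminf_geometric[of "1/2::real"] by simp
  finally show ?thesis by simp
qed

lemma mu_small:
  assumes "\<epsilon> > 0"
  shows "\<exists>F. finite F \<and> (\<forall>S. S \<inter> F = {} \<longrightarrow> mu S < \<epsilon>)"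
proof -
  obtain N where N: "4 * real (card A) * (1/2::real)^N < \<epsilon>"
  proof -
    have "(\<lambda>N. 4 * real (card A) * (1/2::real)^N) \<longlonglongrightarrow> 4 * real (card A) * 0"
      by (intro tendsto_mult tendsto_const LIMSEQ_power_zero) simp
    then have "\<exists>N. \<forall>n\<ge>N. dist (4 * real (card A) * (1/2::real)^n) 0 < \<epsilon>"
      using assms by (simp add: LIMSEQ_def)
    then obtain N where "dist (4 * real (card A) * (1/2::real)^N) 0 < \<epsilon>" by blast
    then show ?thesis using that by (simp add: dist_real_def)
  qed
  define F where "F = (\<Union>n<N. DD0 n \<union> DD1 n)"
  have "finite F" unfolding F_def using D0_fin D1_fin by auto
  moreover have "mu S < \<epsilon>" if "S \<inter> F = {}" for S
  proof -
    have "\<forall>n<N. S \<inter> (DD0 n \<union> DD1 n) = {}" using that unfolding F_def by blast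
    then show ?thesis using mu_tail N by (meson order_le_less_trans)
  qed
  ultimately show ?thesis by blast
qed

end


lemma gap_right: fixes F :: "real set" assumes "finite F" shows "\<exists>\<delta>>0. \<forall>f\<in>F. f \<le> z \<or> z + \<delta> \<le> f"
proof -
  define G where "G = insert 1 ((\<lambda>f. f - z) ` {f\<in>F. z < f})"
  have fG: "finite G" unfolding G_def using assms by auto
  have Gpos: "\<forall>g\<in>G. 0 < g" unfolding G_def by auto
  define \<delta> where "\<delta> = Min G"
  have "\<delta> \<in> G" unfolding \<delta>_def using fG G_def by (intro Min_in) auto
  then have "\<delta> > 0" using Gpos by auto
  moreover have "\<forall>f\<in>F. f \<le> z \<or> z + \<delta> \<le> f"
  proof
    fix f assume f: "f \<in> F"
    show "f \<le> z \<or> z + \<delta> \<le> f"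
    proof (cases "z < f")
      case True
      then have "f - z \<in> G" unfolding G_def using f by auto
      then have "\<delta> \<le> f - z" unfolding \<delta>_def using fG by auto
      then show ?thesis by auto
    qed auto
  qed
  ultimately show ?thesis by blast
qed

lemma gap_left: fixes F :: "real set" assumes "finite F" shows "\<exists>\<delta>>0. \<forall>f\<in>F. z \<le> f \<or> f \<le> z - \<delta>"
proof -
  obtain \<delta> where d: "\<delta> > 0" "\<forall>f\<in>uminus ` F. f \<le> -z \<or> -z + \<delta> \<le> f" using gap_right[of "uminus ` F" "-z"] assms by auto
  have "\<forall>f\<in>F. z \<le> f \<or> f \<le> z - \<delta>"
  proof
    fix f assume "f \<in> F" then have "-f \<in> uminus ` F" by auto
    then show "z \<le> f \<or> f \<le> z - \<delta>" using d by force
  qed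
  then show ?thesis using d by blast
qed

context ied
begin

lemma T'n_inj: "inj_on (T'^^n) II"
proof (rule inj_onI)
  fix x y assume x: "x \<in> II" and y: "y \<in> II" and e: "(T'^^n) x = (T'^^n) y"
  have "(T^^n) ((T'^^n) x) = (T^^n) ((T'^^n) y)" using e by simp
  then show "x = y" using Tn_T'n[OF x] Tn_T'n[OF y] by simp
qed

lemma card_big: assumes "card A \<ge> 1" shows "card {a\<in>A. 1 < p0 a} = card A - 1" "card {a\<in>A. 1 < p1 a} = card A - 1"
proof -
  obtain a0 where a0: "a0 \<in> A" "p0 a0 = 1" using o0.psurj[of 1] assms by auto
  have "{a\<in>A. 1 < p0 a} = A - {a0}"
  proof (rule set_eqI)
    fix a show "a \<in> {a\<in>A. 1 < p0 a} \<longleftrightarrow> a \<in> A - {a0}"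
    proof (cases "a \<in> A")
      case True
      have "p0 a = 1 \<longleftrightarrow> a = a0" using a0 True o0.pinj unfolding inj_on_def by auto
      then show ?thesis using o0.prange[OF True] by auto
    qed auto
  qed
  then show "card {a\<in>A. 1 < p0 a} = card A - 1" using a0 finA by simp
  obtain a1 where a1: "a1 \<in> A" "p1 a1 = 1" using o1.psurj[of 1] assms by auto
  have "{a\<in>A. 1 < p1 a} = A - {a1}"
  proof (rule set_eqI)
    fix a show "a \<in> {a\<in>A. 1 < p1 a} \<longleftrightarrow> a \<in> A - {a1}"
    proof (cases "a \<in> A")
      case True
      have "p1 a = 1 \<longleftrightarrow> a = a1" using a1 True o1.pinj unfolding inj_on_def by auto
      then show ?thesis using o1.prange[OF True] by auto
    qed auto
  qed
  then show "card {a\<in>A. 1 < p1 a} = card A - 1" using a1 finA by simp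
qed

lemma D0_card_eq: assumes "card A \<ge> 1" shows "card (DD0 n) = card A - 1"
proof -
  have "inj_on (\<lambda>a. (T'^^n) (o0.off a)) {a\<in>A. 1 < p0 a}"
  proof (rule inj_onI)
    fix a b assume a: "a \<in> {a\<in>A. 1 < p0 a}" and b: "b \<in> {a\<in>A. 1 < p0 a}" and e: "(T'^^n) (o0.off a) = (T'^^n) (o0.off b)"
    have "o0.off a \<in> II" "o0.off b \<in> II" using a b o0.off_nonneg o0.off_lt_L by auto
    then have "o0.off a = o0.off b" using inj_onD[OF T'n_inj e] by blast
    then show "a = b" using o0.off_inj a b by auto
  qed
  then show ?thesis unfolding D0_eq using card_big[OF assms] by (simp add: card_image)
qed

lemma D1_card_eq: assumes "card A \<ge> 1" shows "card (DD1 n) = card A - 1"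
proof -
  have "inj_on (\<lambda>a. (T^^n) (o1.off a)) {a\<in>A. 1 < p1 a}"
  proof (rule inj_onI)
    fix a b assume a: "a \<in> {a\<in>A. 1 < p1 a}" and b: "b \<in> {a\<in>A. 1 < p1 a}" and e: "(T^^n) (o1.off a) = (T^^n) (o1.off b)"
    have "o1.off a \<in> II" "o1.off b \<in> II" using a b o1.off_nonneg o1.off_lt_L by auto
    then have "o1.off a = o1.off b" using inj_onD[OF Tn_inj e] by blast
    then show "a = b" using o1.off_inj a b by auto
  qed
  then show ?thesis unfolding D1_eq using card_big[OF assms] by (simp add: card_image)
qed

lemma mu_total: assumes "card A \<ge> 1" shows "mu II = 4 * (real (card A) - 1)"
proof -
  have "wt II n = (2 * (real (card A) - 1)) * (1/2)^n" for n
  proof -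
    have "DD0 n \<inter> II = DD0 n" "DD1 n \<inter> II = DD1 n" using D0_sub D1_sub by auto
    then show ?thesis unfolding wt_def using D0_card_eq[OF assms] D1_card_eq[OF assms] assms
      by (simp add: of_nat_diff)
  qed
  then have "wt II = (\<lambda>n. (2 * (real (card A) - 1)) * (1/2)^n)" by (rule ext)
  then have "mu II = (\<Sum>n. (2 * (real (card A) - 1)) * (1/2::real)^n)" unfolding mu_def' by simp
  also have "\<dots> = (2 * (real (card A) - 1)) * 2"
    using suminf_mult[OF summable_geometric[of "1/2::real"]] suminf_geometric[of "1/2::real"] by simp
  finally show ?thesis by simp
qed

lemma ip_eq: "ip y = y + mu {0..y}" unfolding iplus_def ..

lemma im_eq: assumes "card A \<ge> 1" "y \<le> L" shows "im y = y + mu {0..<y}"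
proof (cases "y = L")
  case True then show ?thesis unfolding iminus_def using mu_total[OF assms(1)] by simp
next
  case False then show ?thesis unfolding iminus_def by simp
qed

lemma ip_im_diff: assumes "card A \<ge> 1" "0 \<le> y" "y \<le> L" shows "ip y = im y + mu {y}"
proof -
  have "{0..y} = {0..<y} \<union> {y}" using assms by auto
  then have "mu {0..y} = mu {0..<y} + mu {y}" using mu_add[of "{0..<y}" "{y}"] by simp
  then show ?thesis using ip_eq im_eq[OF assms(1,3)] by simp
qed

lemma im_le_ip: "card A \<ge> 1 \<Longrightarrow> 0 \<le> y \<Longrightarrow> y \<le> L \<Longrightarrow> im y \<le> ip y"
  using ip_im_diff mu_nonneg by (metis le_add_same_cancel1)

lemma ip_lt_im: assumes "card A \<ge> 1" "y < y'" "y' \<le> L" shows "ip y + (y' - y) \<le> im y'"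
proof -
  have "mu {0..y} \<le> mu {0..<y'}" using assms by (intro mu_mono) auto
  then show ?thesis using ip_eq im_eq[OF assms(1,3)] by simp
qed

lemma rep_lt: assumes "card A \<ge> 1" "0 \<le> y" "y < y'" "y' \<le> L" "u \<in> {im y, ip y}" "v \<in> {im y', ip y'}"
  shows "u + (y' - y) \<le> v"
proof -
  have "u \<le> ip y" using assms im_le_ip[of y] by auto
  moreover have "im y' \<le> v" using assms im_le_ip[of y'] by auto
  ultimately show ?thesis using ip_lt_im[OF assms(1,3,4)] by linarith
qed

lemma mu_Icc_split: assumes "0 \<le> z" "z \<le> z'" shows "mu {0..z'} = mu {0..z} + mu {z<..z'}"
proof -
  have "{0..z'} = {0..z} \<union> {z<..z'}" using assms by auto
  moreover have "{0..z} \<inter> {z<..z'} = {}" by auto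
  ultimately show ?thesis using mu_add[of "{0..z}" "{z<..z'}"] by simp
qed

lemma mu_Ico_split: assumes "0 \<le> z'" "z' \<le> z" shows "mu {0..<z} = mu {0..<z'} + mu {z'..<z}"
proof -
  have "{0..<z} = {0..<z'} \<union> {z'..<z}" using assms by auto
  moreover have "{0..<z'} \<inter> {z'..<z} = {}" by auto
  ultimately show ?thesis using mu_add[of "{0..<z'}" "{z'..<z}"] by simp
qed

lemma ip_rc: assumes "0 \<le> z" "\<epsilon> > 0"
  shows "\<exists>\<delta>>0. \<forall>z'. z < z' \<longrightarrow> z' < z + \<delta> \<longrightarrow> ip z' < ip z + \<epsilon>"
proof -
  obtain F where F: "finite F" "\<forall>S. S \<inter> F = {} \<longrightarrow> mu S < \<epsilon>/2" using mu_small[of "\<epsilon>/2"] assms by auto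
  obtain \<delta> where d: "\<delta> > 0" "\<forall>f\<in>F. f \<le> z \<or> z + \<delta> \<le> f" using gap_right[OF F(1)] by blast
  have "ip z' < ip z + \<epsilon>" if z': "z < z'" "z' < z + min \<delta> (\<epsilon>/2)" for z'
  proof -
    have "{z<..z'} \<inter> F = {}" using d z' by force
    then have "mu {z<..z'} < \<epsilon>/2" using F by auto
    moreover have "ip z' = z' + mu {0..z} + mu {z<..z'}" using ip_eq mu_Icc_split[of z z'] assms z' by simp
    ultimately show ?thesis using ip_eq[of z] z' by simp
  qed
  moreover have "min \<delta> (\<epsilon>/2) > 0" using d assms by auto
  ultimately show ?thesis by blast
qed

lemma im_lc: assumes "card A \<ge> 1" "z \<le> L" "\<epsilon> > 0"
  shows "\<exists>\<delta>>0. \<forall>z'. z - \<delta> < z' \<longrightarrow> z' < z \<longrightarrow> 0 \<le> z' \<longrightarrow> im z - \<epsilon> < im z'"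
proof -
  obtain F where F: "finite F" "\<forall>S. S \<inter> F = {} \<longrightarrow> mu S < \<epsilon>/2" using mu_small[of "\<epsilon>/2"] assms by auto
  obtain \<delta> where d: "\<delta> > 0" "\<forall>f\<in>F. z \<le> f \<or> f \<le> z - \<delta>" using gap_left[OF F(1)] by blast
  have "im z - \<epsilon> < im z'" if z': "z - min \<delta> (\<epsilon>/2) < z'" "z' < z" "0 \<le> z'" for z'
  proof -
    have "{z'..<z} \<inter> F = {}" using d z' by force
    then have "mu {z'..<z} < \<epsilon>/2" using F by auto
    moreover have "im z = z + mu {0..<z'} + mu {z'..<z}" using im_eq[OF assms(1,2)] mu_Ico_split[of z' z] z' by simp
    moreover have "im z' = z' + mu {0..<z'}" using im_eq[OF assms(1), of z'] z' assms by simp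
    ultimately show ?thesis using z' by simp
  qed
  moreover have "min \<delta> (\<epsilon>/2) > 0" using d assms by auto
  ultimately show ?thesis by blast
qed

lemma ip_mono: "card A \<ge> 1 \<Longrightarrow> 0 \<le> y \<Longrightarrow> y < y' \<Longrightarrow> y' \<le> L \<Longrightarrow> ip y < ip y'"
  using rep_lt[of y y' "ip y" "ip y'"] by auto
lemma im_mono: "card A \<ge> 1 \<Longrightarrow> 0 \<le> y \<Longrightarrow> y < y' \<Longrightarrow> y' \<le> L \<Longrightarrow> im y < im y'"
  using rep_lt[of y y' "im y" "im y'"] by auto

end


locale ied0 = ied A p0 p1 lam for A :: "'a set" and p0 p1 lam +
  assumes card1: "card A \<ge> 1" and zeroD: "0 \<notin> Dall"
begin

abbreviation "KK \<equiv> Kset A p0 p1 lam"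

lemma S0_D: "a \<in> A \<Longrightarrow> o0.off a \<noteq> 0 \<Longrightarrow> o0.off a \<in> Dall"
proof -
  assume a: "a \<in> A" "o0.off a \<noteq> 0"
  then have "p0 a \<noteq> 1" using o0.off_first by auto
  then have "1 < p0 a" using o0.prange[OF a(1)] by auto
  then have "o0.off a \<in> DD0 0" unfolding D0_eq using a by auto
  then show ?thesis unfolding Dall_def by blast
qed

lemma S1_D: "a \<in> A \<Longrightarrow> o1.off a \<noteq> 0 \<Longrightarrow> o1.off a \<in> Dall"
proof -
  assume a: "a \<in> A" "o1.off a \<noteq> 0"
  then have "p1 a \<noteq> 1" using o1.off_first by auto
  then have "1 < p1 a" using o1.prange[OF a(1)] by auto
  then have "o1.off a \<in> DD1 0" unfolding D1_eq using a by auto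
  then show ?thesis unfolding Dall_def by blast
qed

lemma T_notD: assumes y: "y \<in> II" "y \<notin> Dall" "y \<noteq> 0" shows "T y \<notin> Dall"
proof
  assume "T y \<in> Dall"
  then obtain n where "T y \<in> DD0 n \<or> T y \<in> DD1 n" unfolding Dall_def by auto
  then show False
  proof
    assume "T y \<in> DD0 n"
    then obtain a where a: "a \<in> A" "1 < p0 a" "T y = (T'^^n) (o0.off a)" unfolding D0_eq by auto
    have "y = T' (T y)" using T'_T y by simp
    also have "\<dots> = (T'^^Suc n) (o0.off a)" using a by simp
    finally have "y \<in> DD0 (Suc n)" unfolding D0_eq using a by auto
    then show False using y unfolding Dall_def by blast
  next
    assume "T y \<in> DD1 n"
    then obtain a where a: "a \<in> A" "1 < p1 a" "T y = (T^^n) (o1.off a)" unfolding D1_eq by auto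
    show False
    proof (cases n)
      case 0
      then have "T y = T (o0.off a)" using a T_off by simp
      moreover have "o0.off a \<in> II" using a o0.off_nonneg o0.off_lt_L by auto
      ultimately have "y = o0.off a" using inj_onD[OF T_inj] y by blast
      then show False using S0_D[OF a(1)] y by auto
    next
      case (Suc m)
      have "T y = T ((T^^m) (o1.off a))" using a Suc by simp
      moreover have "(T^^m) (o1.off a) \<in> II" using Tn_in a o1.off_nonneg o1.off_lt_L by auto
      ultimately have "y = (T^^m) (o1.off a)" using inj_onD[OF T_inj] y by blast
      then have "y \<in> DD1 m" unfolding D1_eq using a by auto
      then show False using y unfolding Dall_def by blast
    qed
  qed
qed

lemma T_zero: assumes "y \<in> II" "T y = 0" shows "y = 0 \<or> y \<in> Dall"
proof -
  obtain c where c: "c \<in> A" "p1 c = 1" using o1.psurj[of 1] card1 by auto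
  have "T (o0.off c) = 0" using T_off[OF c(1)] o1.off_first[OF c] by simp
  moreover have "o0.off c \<in> II" using c o0.off_nonneg o0.off_lt_L by auto
  ultimately have "y = o0.off c" using inj_onD[OF T_inj] assms by fastforce
  then show ?thesis using S0_D[OF c(1)] by auto
qed

lemma LnotD: "L \<notin> Dall" using Dall_sub by auto

lemma mu0: "mu {0} = 0" using mu_single_zero zeroD by simp
lemma mu_empty: "mu {} = 0" using mu_add[of "{}" "{}"] by simp
lemma Lpos0: "0 < L"
proof -
  have "A \<noteq> {}" using card1 by auto
  then show ?thesis unfolding lstar_def using finA o0.lpos by (intro sum_pos) auto
qed
lemma im0: "im 0 = 0" using im_eq[OF card1, of 0] Lpos0 mu_empty by simp
lemma ip0: "ip 0 = 0" using ip_im_diff[OF card1, of 0] Lpos0 mu0 im0 by simp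
lemma ipL: "ip L = im L" using ip_im_diff[OF card1, of L] Lpos0 mu_single_zero[OF LnotD] by simp
lemma ip_im_nD: "0 \<le> y \<Longrightarrow> y \<le> L \<Longrightarrow> y \<notin> Dall \<Longrightarrow> ip y = im y"
  using ip_im_diff[OF card1] mu_single_zero by simp
lemma ip_im_D: "0 \<le> y \<Longrightarrow> y \<le> L \<Longrightarrow> y \<in> Dall \<Longrightarrow> ip y = im y + mu {y} \<and> mu {y} > 0"
  using ip_im_diff[OF card1] mu_single_pos by simp

lemma K_cases: assumes "k \<in> KK" shows "(\<exists>y\<in>II. k = ip y) \<or> (\<exists>y. 0 < y \<and> y \<le> L \<and> k = im y)"
proof -
  have "k \<in> im ` II \<or> k \<in> ip ` II \<or> k = im L" using assms unfolding Kset_def Iint_def by auto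
  then show ?thesis
  proof (elim disjE)
    assume "k \<in> im ` II"
    then obtain y where y: "y \<in> II" "k = im y" by auto
    show ?thesis
    proof (cases "y = 0")
      case True then have "k = ip 0" using y im0 ip0 by simp
      then show ?thesis using Lpos0 by auto
    next
      case False then have "0 < y" "y \<le> L" using y by auto
      then show ?thesis using y(2) by blast
    qed
  next
    assume "k \<in> ip ` II" then show ?thesis by auto
  next
    assume "k = im L" then show ?thesis using Lpos0 by auto
  qed
qed

lemma K_ip: "y \<in> II \<Longrightarrow> ip y \<in> KK" unfolding Kset_def Iint_def by auto
lemma K_im: assumes "0 < y" "y \<le> L" shows "im y \<in> KK"
proof (cases "y = L")
  case True then show ?thesis unfolding Kset_def by auto
next
  case False then show ?thesis using assms unfolding Kset_def Iint_def by auto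
qed

lemma ip_inj: "inj_on ip {0..L}"
proof (rule inj_onI)
  fix x y assume "x \<in> {0..L}" "y \<in> {0..L}" "ip x = ip y"
  then show "x = y" using ip_mono[OF card1, of x y] ip_mono[OF card1, of y x] by (cases x y rule: linorder_cases) auto
qed
lemma im_inj: "inj_on im {0..L}"
proof (rule inj_onI)
  fix x y assume "x \<in> {0..L}" "y \<in> {0..L}" "im x = im y"
  then show "x = y" using im_mono[OF card1, of x y] im_mono[OF card1, of y x] by (cases x y rule: linorder_cases) auto
qed

lemma im_ip_eq: assumes "0 \<le> y" "y \<le> L" "0 \<le> z" "z \<le> L" "im y = ip z" shows "z = y"
proof (rule ccontr)
  assume "z \<noteq> y"
  then consider "z < y" | "y < z" by linarith
  then show False
  proof cases
    case 1 then show False using rep_lt[OF card1 assms(3) 1 assms(2), of "ip z" "im y"] assms by simp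
  next
    case 2 then show False using rep_lt[OF card1 assms(1) 2 assms(4), of "im y" "ip z"] assms by simp
  qed
qed

definition Th :: "real \<Rightarrow> real" where
  "Th k = (if k \<in> ip ` II then ip (T (inv_into II ip k)) else im (Tl (inv_into {0<..L} im k)))"

lemma E1: assumes "y \<in> II" shows "Th (ip y) = ip (T y)"
proof -
  have "II \<subseteq> {0..L}" by auto
  then have "inv_into II ip (ip y) = y" using inv_into_f_f[OF inj_on_subset[OF ip_inj] assms] by blast
  then show ?thesis unfolding Th_def using assms by auto
qed

lemma E2: assumes y: "0 < y" "y \<le> L" shows "Th (im y) = im (Tl y)"
proof (cases "im y \<in> ip ` II")
  case True
  then obtain z where z: "z \<in> II" "im y = ip z" by auto
  have zy: "z = y" using im_ip_eq[of y z] y z by auto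
  have yL: "y < L" using z zy by auto
  have nD: "y \<notin> Dall"
  proof
    assume "y \<in> Dall" then show False using ip_im_D[of y] y z zy by auto
  qed
  have yS: "y \<notin> o0.off ` A" using S0_D nD y by auto
  have TlT: "Tl y = T y" using Tl_T[OF y(1) yL yS] .
  have TyI: "T y \<in> II" using T_in y yL by auto
  have TnD: "T y \<notin> Dall" using T_notD[of y] nD y yL by auto
  have "Th (im y) = ip (T y)" using E1[of y] z zy by simp
  also have "\<dots> = im (T y)" using ip_im_nD[OF _ _ TnD] TyI by auto
  finally show ?thesis using TlT by simp
next
  case False
  have sub: "{0<..L} \<subseteq> {0..L}" by auto
  have "y \<in> {0<..L}" using y by auto
  then have "inv_into {0<..L} im (im y) = y" using inv_into_f_f[OF inj_on_subset[OF im_inj sub]] by blast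
  then show ?thesis unfolding Th_def using False by simp
qed

end


context ied0
begin

lemma Th_piece_ip: assumes a: "a \<in> A" "o0.off a \<le> y" "y < o0.off a + lam a"
  shows "Th (ip y) = ip (y + sh a)"
proof -
  have "y \<in> II" using a o0.off_nonneg[of a] o0.off_top[of a] by auto
  then show ?thesis using E1 T_eq[OF a] by simp
qed

lemma Th_piece_im: assumes a: "a \<in> A" "o0.off a < y" "y \<le> o0.off a + lam a"
  shows "Th (im y) = im (y + sh a)"
proof -
  have "0 < y" "y \<le> L" using a o0.off_nonneg[of a] o0.off_top[of a] by auto
  then show ?thesis using E2 Tl_eq[OF a] by simp
qed

lemma sh_range: assumes "a \<in> A" "o0.off a \<le> y" "y \<le> o0.off a + lam a"
  shows "0 \<le> y + sh a" "y + sh a \<le> L" "o1.off a \<le> y + sh a"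
  using assms o1.off_nonneg[of a] o1.off_top[of a] unfolding sh_def by auto

lemma near_right: assumes "0 \<le> z" "z < z'" "z' \<le> L" "u \<in> {im z', ip z'}" "ip z' < ip z + \<epsilon>"
  shows "dist u (ip z) < \<epsilon>"
proof -
  have "ip z + (z' - z) \<le> u" using rep_lt[OF card1 assms(1-3), of "ip z" u] assms(4) by simp
  moreover have "u \<le> ip z'" using assms(4) im_le_ip[OF card1, of z'] assms by auto
  ultimately show ?thesis using assms unfolding dist_real_def by auto
qed

lemma near_left: assumes "0 \<le> z'" "z' < z" "z \<le> L" "u \<in> {im z', ip z'}" "im z - \<epsilon> < im z'"
  shows "dist u (im z) < \<epsilon>"
proof -
  have "u + (z - z') \<le> im z" using rep_lt[OF card1 assms(1-3), of u "im z"] assms(4) by simp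
  moreover have "im z' \<le> u" using assms(4) im_le_ip[OF card1, of z'] assms by auto
  ultimately show ?thesis using assms unfolding dist_real_def by auto
qed

lemma K_rep: assumes "k' \<in> KK"
  obtains y' where "y' \<in> II" "k' = ip y'" | y' where "0 < y'" "y' \<le> L" "k' = im y'"
  using K_cases[OF assms] by blast

lemma cont_ip: assumes y: "y \<in> II" and e: "\<epsilon> > 0"
  shows "\<exists>d>0. \<forall>k'\<in>KK. dist k' (ip y) < d \<longrightarrow> dist (Th k') (Th (ip y)) < \<epsilon>"
proof -
  define a where "a = o0.pc y"
  have a: "a \<in> A" "o0.off a \<le> y" "y < o0.off a + lam a" using o0.pc y unfolding a_def by auto
  define l where "l = o0.off a"
  define r where "r = o0.off a + lam a"
  define t where "t = sh a"
  have Thk: "Th (ip y) = ip (y + t)" using Th_piece_ip[OF a] unfolding t_def .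
  have yt: "0 \<le> y + t" "y + t \<le> L" using sh_range[of a y] a unfolding t_def by auto
  have ytL: "y + t < L" using T_in[OF y] T_eq[OF a] unfolding t_def by simp
  obtain \<delta>1 where d1: "\<delta>1 > 0" "\<forall>z'. y + t < z' \<longrightarrow> z' < y + t + \<delta>1 \<longrightarrow> ip z' < ip (y + t) + \<epsilon>"
    using ip_rc[OF yt(1) e] by blast
  obtain \<delta>2 where d2: "\<delta>2 > 0" "y \<in> Dall \<Longrightarrow> \<delta>2 \<le> mu {y}"
    and L2: "\<And>y'. 0 \<le> y' \<Longrightarrow> y' < y \<Longrightarrow> ip y - ip y' < \<delta>2 \<Longrightarrow>
          l < y' \<and> im (y+t) - \<epsilon> < im (y' + t) \<and> ip (y+t) = im (y+t)"
  proof (cases "y \<in> Dall \<or> y = 0")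
    case True
    show ?thesis
    proof (rule that[of "if y \<in> Dall then mu {y} else 1"])
      show "0 < (if y \<in> Dall then mu {y} else 1)" using mu_single_pos by auto
      show "y \<in> Dall \<Longrightarrow> (if y \<in> Dall then mu {y} else 1) \<le> mu {y}" by simp
      fix y' assume y': "0 \<le> y'" "y' < y" "ip y - ip y' < (if y \<in> Dall then mu {y} else 1)"
      then have yD: "y \<in> Dall" using True by auto
      have "ip y' + (y - y') \<le> im y" using ip_lt_im[OF card1 y'(2)] y by auto
      moreover have "ip y = im y + mu {y}" using ip_im_D[OF _ _ yD] y by auto
      ultimately show "l < y' \<and> im (y+t) - \<epsilon> < im (y' + t) \<and> ip (y+t) = im (y+t)" using y' yD by auto
    qed
  next
    case False
    then have nD: "y \<notin> Dall" and y0: "y \<noteq> 0" by auto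
    have "y \<noteq> l" using S0_D[OF a(1)] nD y0 unfolding l_def by auto
    then have ly: "l < y" using a unfolding l_def by auto
    have "T y \<noteq> 0" using T_zero[OF y] nD y0 by auto
    then have yt0: "0 < y + t" using T_eq[OF a] yt unfolding t_def by auto
    have TnD: "y + t \<notin> Dall" using T_notD[OF y nD y0] T_eq[OF a] unfolding t_def by simp
    obtain \<delta>3 where d3: "\<delta>3 > 0" "\<forall>z'. y + t - \<delta>3 < z' \<longrightarrow> z' < y + t \<longrightarrow> 0 \<le> z' \<longrightarrow> im (y+t) - \<epsilon> < im z'"
      using im_lc[OF card1 yt(2) e] by blast
    show ?thesis
    proof (rule that[of "min (y - l) \<delta>3"])
      show "0 < min (y - l) \<delta>3" using ly d3 by auto
      show "y \<in> Dall \<Longrightarrow> min (y - l) \<delta>3 \<le> mu {y}" using nD by simp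
      fix y' assume y': "0 \<le> y'" "y' < y" "ip y - ip y' < min (y - l) \<delta>3"
      have "ip y' + (y - y') \<le> ip y" using rep_lt[OF card1 y'(1,2), of "ip y'" "ip y"] y by auto
      then have yy: "y - y' < min (y - l) \<delta>3" using y' by auto
      then have ly': "l < y'" by auto
      have "0 \<le> y' + t" using sh_range[of a y'] a ly' y' unfolding l_def t_def by auto
      then have "im (y+t) - \<epsilon> < im (y' + t)" using d3 yy y' by auto
      moreover have "ip (y+t) = im (y+t)" using ip_im_nD[OF yt TnD] .
      ultimately show "l < y' \<and> im (y+t) - \<epsilon> < im (y' + t) \<and> ip (y+t) = im (y+t)" using ly' by auto
    qed
  qed
  define d where "d = min (min \<delta>1 (r - y)) \<delta>2"
  have dpos: "d > 0" unfolding d_def r_def using d1 d2 a by auto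
  have main: "dist (Th k') (ip (y + t)) < \<epsilon>" if k': "k' \<in> KK" "dist k' (ip y) < d" for k'
  proof -
    have right: "dist (Th k') (ip (y + t)) < \<epsilon>" if y': "y < y'" "y' \<le> L" "u \<in> {im y', ip y'}" "k' = u" for y' u
    proof -
      have "ip y + (y' - y) \<le> u" using rep_lt[OF card1 _ y'(1,2), of "ip y" u] y y' by auto
      then have "y' - y < d" using k' y' unfolding dist_real_def by auto
      then have y'r: "y' < r" "y' < y + \<delta>1" unfolding d_def by auto
      have ay': "o0.off a \<le> y'" "y' < o0.off a + lam a" using a y' y'r unfolding r_def by auto
      have "Th k' \<in> {im (y' + t), ip (y' + t)}"
      proof (cases "u = ip y'")
        case True then show ?thesis using Th_piece_ip[OF a(1) ay'] y' unfolding t_def by simp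
      next
        case False then have "u = im y'" using y' by auto
        then show ?thesis using Th_piece_im[of a y'] a ay' y' unfolding t_def by auto
      qed
      moreover have "y' + t \<le> L" using sh_range[of a y'] a ay' unfolding t_def by auto
      moreover have "ip (y' + t) < ip (y + t) + \<epsilon>" using d1 y' y'r by auto
      ultimately show ?thesis using near_right[OF yt(1), of "y' + t" "Th k'"] y' by auto
    qed
    have left: "dist (Th k') (ip (y + t)) < \<epsilon>" if y': "0 \<le> y'" "y' < y" "u \<in> {im y', ip y'}" "k' = u" for y' u
    proof -
      have "u + (y - y') \<le> ip y" using rep_lt[OF card1 y'(1,2), of u "ip y"] y y' by auto
      moreover have "im y' \<le> u" using y' im_le_ip[OF card1, of y'] y by auto
      ultimately have "ip y - ip y' < \<delta>2"
      proof -
        have "ip y - u < d" using k' y' unfolding dist_real_def by auto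
        moreover have "u \<le> ip y'" using y' im_le_ip[OF card1, of y'] y by auto
        ultimately show ?thesis unfolding d_def by auto
      qed
      then have L2': "l < y'" "im (y+t) - \<epsilon> < im (y' + t)" "ip (y+t) = im (y+t)" using L2[OF y'(1,2)] by auto
      have ay': "o0.off a < y'" "y' < o0.off a + lam a" using a y' L2' unfolding l_def by auto
      have "Th k' \<in> {im (y' + t), ip (y' + t)}"
      proof (cases "u = ip y'")
        case True then show ?thesis using Th_piece_ip[OF a(1)] ay' y' unfolding t_def by simp
      next
        case False then have "u = im y'" using y' by auto
        then show ?thesis using Th_piece_im[of a y'] a ay' y' unfolding t_def by auto
      qed
      moreover have "0 \<le> y' + t" using sh_range[of a y'] a ay' unfolding t_def by auto
      ultimately show ?thesis using near_left[of "y' + t" "y + t" "Th k'" \<epsilon>] y' yt L2' by auto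
    qed
    from K_rep[OF k'(1)] show ?thesis
    proof cases
      case (1 y')
      consider "y < y'" | "y' = y" | "y' < y" by linarith
      then show ?thesis
      proof cases
        case 1 then show ?thesis using right[of y' "ip y'"] \<open>y' \<in> II\<close> \<open>k' = ip y'\<close> by auto
      next
        case 2 then show ?thesis using Thk \<open>k' = ip y'\<close> e by simp
      next
        case 3 then show ?thesis using left[of y' "ip y'"] \<open>y' \<in> II\<close> \<open>k' = ip y'\<close> by auto
      qed
    next
      case (2 y')
      consider "y < y'" | "y' = y" | "y' < y" by linarith
      then show ?thesis
      proof cases
        case 1 then show ?thesis using right[of y' "im y'"] 2 by auto
      next
        case 3 then show ?thesis using left[of y' "im y'"] 2 by auto
      next
        case eq: 2
        show ?thesis
        proof (cases "y \<in> Dall")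
          case True
          have "ip y = im y + mu {y}" using ip_im_D[OF _ _ True] y by auto
          then have "dist k' (ip y) = mu {y}" using \<open>k' = im y'\<close> eq mu_nonneg[of "{y}"] unfolding dist_real_def by auto
          moreover have "d \<le> mu {y}" using d2 True unfolding d_def by auto
          ultimately show ?thesis using k' by auto
        next
          case False
          then have "k' = ip y" using ip_im_nD[OF _ _ False] y \<open>k' = im y'\<close> eq by auto
          then show ?thesis using Thk e by simp
        qed
      qed
    qed
  qed
  show ?thesis using dpos main Thk by auto
qed

lemma cont_im: assumes y: "0 < y" "y \<le> L" "im y \<notin> ip ` II" and e: "\<epsilon> > 0"
  shows "\<exists>d>0. \<forall>k'\<in>KK. dist k' (im y) < d \<longrightarrow> dist (Th k') (Th (im y)) < \<epsilon>"
proof -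
  have DL: "y < L \<Longrightarrow> y \<in> Dall"
  proof (rule ccontr)
    assume "y < L" "y \<notin> Dall"
    then have "im y = ip y" using ip_im_nD[of y] y by auto
    then show False using y \<open>y < L\<close> by auto
  qed
  define a where "a = o0.pcl y"
  have a: "a \<in> A" "o0.off a < y" "y \<le> o0.off a + lam a" using o0.pcl y unfolding a_def by auto
  define l where "l = o0.off a"
  define t where "t = sh a"
  have Thk: "Th (im y) = im (y + t)" using Th_piece_im[OF a] unfolding t_def .
  have yt: "0 \<le> y + t" "y + t \<le> L" using sh_range[of a y] a unfolding t_def by auto
  obtain \<delta>3 where d3: "\<delta>3 > 0" "\<forall>z'. y + t - \<delta>3 < z' \<longrightarrow> z' < y + t \<longrightarrow> 0 \<le> z' \<longrightarrow> im (y+t) - \<epsilon> < im z'"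
    using im_lc[OF card1 yt(2) e] by blast
  define \<delta>2 where "\<delta>2 = (if y < L then mu {y} else 1)"
  have d2: "\<delta>2 > 0" unfolding \<delta>2_def using DL mu_single_pos by auto
  define d where "d = min (min (y - l) \<delta>3) \<delta>2"
  have dpos: "d > 0" unfolding d_def l_def using d2 d3 a by auto
  have main: "dist (Th k') (im (y + t)) < \<epsilon>" if k': "k' \<in> KK" "dist k' (im y) < d" for k'
  proof -
    have noright: False if y': "y < y'" "y' \<le> L" "k' \<in> {im y', ip y'}" for y'
    proof -
      have yL: "y < L" using y' by auto
      have "ip y + (y' - y) \<le> k'" using rep_lt[OF card1 _ y'(1,2), of "ip y" k'] y y' by auto
      moreover have "ip y = im y + mu {y}" using ip_im_D[OF _ _ DL[OF yL]] y by auto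
      moreover have "d \<le> mu {y}" unfolding d_def \<delta>2_def using yL by auto
      ultimately show False using k' y' unfolding dist_real_def by auto
    qed
    have left: "dist (Th k') (im (y + t)) < \<epsilon>" if y': "0 \<le> y'" "y' < y" "k' \<in> {im y', ip y'}" for y'
    proof -
      have "k' + (y - y') \<le> im y" using rep_lt[OF card1 y'(1,2) y(2), of k' "im y"] y' by auto
      then have yy: "y - y' < d" using k' unfolding dist_real_def by auto
      then have ly': "l < y'" "y + t - \<delta>3 < y' + t" unfolding d_def by auto
      have ay': "o0.off a < y'" "y' < o0.off a + lam a" using a y' ly' unfolding l_def by auto
      have "Th k' \<in> {im (y' + t), ip (y' + t)}"
      proof (cases "k' = ip y'")
        case True then show ?thesis using Th_piece_ip[OF a(1)] ay' unfolding t_def by simp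
      next
        case False then have "k' = im y'" using y' by auto
        then show ?thesis using Th_piece_im[of a y'] a ay' unfolding t_def by auto
      qed
      moreover have "0 \<le> y' + t" using sh_range[of a y'] a ay' unfolding t_def by auto
      moreover have "im (y+t) - \<epsilon> < im (y' + t)" using d3 ly' y' \<open>0 \<le> y' + t\<close> by auto
      ultimately show ?thesis using near_left[of "y' + t" "y + t" "Th k'" \<epsilon>] y' yt by auto
    qed
    from K_rep[OF k'(1)] show ?thesis
    proof cases
      case (1 y')
      consider "y < y'" | "y' = y" | "y' < y" by linarith
      then show ?thesis
      proof cases
        case 1 then show ?thesis using noright[of y'] \<open>y' \<in> II\<close> \<open>k' = ip y'\<close> by auto
      next
        case 2
        then have yL: "y < L" using \<open>y' \<in> II\<close> by auto
        have "ip y = im y + mu {y}" using ip_im_D[OF _ _ DL[OF yL]] y by auto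
        moreover have "d \<le> mu {y}" unfolding d_def \<delta>2_def using yL by auto
        ultimately show ?thesis using k' 2 \<open>k' = ip y'\<close> mu_nonneg[of "{y}"] unfolding dist_real_def by auto
      next
        case 3 then show ?thesis using left[of y'] \<open>y' \<in> II\<close> \<open>k' = ip y'\<close> by auto
      qed
    next
      case (2 y')
      consider "y < y'" | "y' = y" | "y' < y" by linarith
      then show ?thesis
      proof cases
        case 1 then show ?thesis using noright[of y'] 2 by auto
      next
        case eq: 2 then show ?thesis using Thk e 2 by simp
      next
        case 3 then show ?thesis using left[of y'] 2 by auto
      qed
    qed
  qed
  show ?thesis using dpos main Thk by auto
qed

theorem Th_cont: "continuous_on KK Th"
  unfolding continuous_on_iff
proof (intro ballI allI impI)
  fix k \<epsilon> assume k: "k \<in> KK" and e: "(\<epsilon>::real) > 0"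
  show "\<exists>d>0. \<forall>k'\<in>KK. dist k' k < d \<longrightarrow> dist (Th k') (Th k) < \<epsilon>"
  proof (cases "k \<in> ip ` II")
    case True
    then obtain y where "y \<in> II" "k = ip y" by auto
    then show ?thesis using cont_ip e by simp
  next
    case False
    then obtain y where y: "0 < y" "y \<le> L" "k = im y" using K_cases[OF k] by auto
    then show ?thesis using cont_im[of y] False e by simp
  qed
qed

theorem Th_into: "Th ` KK \<subseteq> KK"
proof
  fix k' assume "k' \<in> Th ` KK"
  then obtain k where k: "k \<in> KK" "k' = Th k" by auto
  from K_rep[OF k(1)] show "k' \<in> KK"
  proof cases
    case (1 y) then show ?thesis using E1 K_ip T_in k by simp
  next
    case (2 y) then show ?thesis using E2 K_im Tl_in k by simp
  qed
qed

end


context ied0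
begin

lemma ied_sw: "ied A p1 p0 lam"
  using ied unfolding ied_def ie_data_def by auto

lemma D0_sw: "D0 A p1 p0 lam n = DD1 n"
  using ied.D0_eq[OF ied_sw, of n] D1_eq[of n] by simp
lemma D1_sw: "D1 A p1 p0 lam n = DD0 n"
  using ied.D1_eq[OF ied_sw, of n] D0_eq[of n] by simp

lemma mu_sw: "muS A p1 p0 lam = mu"
  unfolding muS_def D0_sw D1_sw by (rule ext) (simp add: add.commute)

lemma ip_sw: "iplus A p1 p0 lam = ip"
  unfolding iplus_def mu_sw ..
lemma im_sw: "iminus A p1 p0 lam = im"
  unfolding iminus_def mu_sw ..
lemma K_sw: "Kset A p1 p0 lam = KK"
  unfolding Kset_def ip_sw im_sw ..
lemma Dall_sw: "ied.Dall A p1 p0 lam = Dall"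
  unfolding ied.Dall_def[OF ied_sw] Dall_def D0_sw D1_sw by auto

lemma ied0_sw: "ied0 A p1 p0 lam"
  unfolding ied0_def ied0_axioms_def Dall_sw using ied_sw card1 zeroD by auto

lemma Tl_sw: "ied.Tl A p1 p0 lam = Tl'"
  unfolding ied.Tl_def[OF ied_sw] ied.sh_def[OF ied_sw] Tl'_def sh_def by (rule ext) simp

abbreviation "Th2 \<equiv> ied0.Th A p1 p0 lam"

lemma Th2_cont: "continuous_on KK Th2"
  using ied0.Th_cont[OF ied0_sw] unfolding K_sw .
lemma Th2_into: "Th2 ` KK \<subseteq> KK"
  using ied0.Th_into[OF ied0_sw] unfolding K_sw .
lemma E1': "y \<in> II \<Longrightarrow> Th2 (ip y) = ip (T' y)"
  using ied0.E1[OF ied0_sw] unfolding ip_sw by blast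
lemma E2': "0 < y \<Longrightarrow> y \<le> L \<Longrightarrow> Th2 (im y) = im (Tl' y)"
  using ied0.E2[OF ied0_sw] unfolding im_sw Tl_sw by blast

lemma Tl'_in: assumes "0 < y" "y \<le> L" shows "0 < Tl' y \<and> Tl' y \<le> L"
  using ied.Tl_in[OF ied_sw] assms unfolding Tl_sw by blast

theorem homeo: "homeomorphism KK KK Th Th2"
proof (rule homeomorphismI)
  show "continuous_on KK Th" by (rule Th_cont)
  show "continuous_on KK Th2" by (rule Th2_cont)
  show "Th ` KK \<subseteq> KK" by (rule Th_into)
  show "Th2 ` KK \<subseteq> KK" by (rule Th2_into)
  show "Th2 (Th k) = k" if "k \<in> KK" for k
    using K_rep[OF that]
  proof cases
    case (1 y) then show ?thesis using E1 E1' T_in T'_T by simp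
  next
    case (2 y) then show ?thesis using E2 E2' Tl_in Tl'_Tl by simp
  qed
  show "Th (Th2 k) = k" if "k \<in> KK" for k
    using K_rep[OF that]
  proof cases
    case (1 y) then show ?thesis using E1 E1' T'_in T_T' by simp
  next
    case (2 y) then show ?thesis using E2 E2' Tl'_in Tl_Tl' by simp
  qed
qed

theorem uniq:
  assumes c: "continuous_on KK Th'" and agree: "\<forall>x\<in>II. Th' (ip x) = ip (T x)" and k: "k \<in> KK"
  shows "Th' k = Th k"
  using K_rep[OF k]
proof cases
  case (1 y) then show ?thesis using agree E1 by simp
next
  case (2 y)
  show ?thesis
  proof (rule ccontr)
    assume ne: "Th' k \<noteq> Th k"
    define \<epsilon> where "\<epsilon> = dist (Th' k) (Th k) / 2"
    have e: "\<epsilon> > 0" unfolding \<epsilon>_def using ne by simp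
    obtain d1 where d1: "d1 > 0" "\<forall>k'\<in>KK. dist k' k < d1 \<longrightarrow> dist (Th' k') (Th' k) < \<epsilon>"
      using c k e unfolding continuous_on_iff by blast
    obtain d2 where d2: "d2 > 0" "\<forall>k'\<in>KK. dist k' k < d2 \<longrightarrow> dist (Th k') (Th k) < \<epsilon>"
      using Th_cont k e unfolding continuous_on_iff by blast
    obtain \<delta> where dl: "\<delta> > 0" "\<forall>z'. y - \<delta> < z' \<longrightarrow> z' < y \<longrightarrow> 0 \<le> z' \<longrightarrow> im y - min d1 d2 < im z'"
      using im_lc[OF card1 2(2), of "min d1 d2"] d1 d2 by auto
    define z where "z = max (y / 2) (y - \<delta> / 2)"
    have z: "y - \<delta> < z" "z < y" "0 \<le> z" unfolding z_def using 2 dl by auto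
    have zI: "z \<in> II" using z 2 by auto
    have "im y - min d1 d2 < im z" using dl z by auto
    moreover have "im z \<le> ip z" using im_le_ip[OF card1] z 2 by auto
    moreover have "ip z \<le> im y" using ip_lt_im[OF card1 z(2) 2(2)] z by auto
    ultimately have dz: "dist (ip z) k < min d1 d2" using 2 unfolding dist_real_def by auto
    have "dist (Th' (ip z)) (Th' k) < \<epsilon>" using d1 dz K_ip[OF zI] by auto
    moreover have "dist (Th (ip z)) (Th k) < \<epsilon>" using d2 dz K_ip[OF zI] by auto
    moreover have "Th' (ip z) = Th (ip z)" using agree E1 zI by simp
    ultimately have "\<bar>Th' (ip z) - Th' k\<bar> < \<epsilon>" "\<bar>Th' (ip z) - Th k\<bar> < \<epsilon>" unfolding dist_real_def by simp_all
    then have "\<bar>Th' k - Th k\<bar> < 2 * \<epsilon>" by arith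
    then show False unfolding \<epsilon>_def dist_real_def by simp
  qed
qed

end


context iek
begin

lemma c_ex: "\<exists>c\<in>A. p1 c = 1" using o1.psurj card2 by auto

lemma zero_notD: "0 \<notin> Dall"
proof
  assume "0 \<in> Dall"
  then obtain n where "0 \<in> DD0 n \<or> 0 \<in> DD1 n" unfolding Dall_def by auto
  then show False
  proof
    assume "0 \<in> DD0 n"
    then obtain a where a: "a \<in> A" "1 < p0 a" "(T'^^n) (o0.off a) = 0" unfolding D0_eq by auto
    have aI: "o0.off a \<in> II" using a o0.off_nonneg o0.off_lt_L by auto
    have e: "(T^^n) 0 = o0.off a" using Tn_T'n[OF aI, of n] a by simp
    obtain a0 where a0: "a0 \<in> A" "p0 a0 = 1" using a0ex by blast
    have off0: "o0.off a0 = 0" using o0.off_first[OF a0] .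
    show False
    proof (cases n)
      case 0 then show False using e a o0.off_zero_iff[OF a(1)] by simp
    next
      case (Suc m) then show False using keaD[OF a0(1) a(1) a(2), of n] e off0 by simp
    qed
  next
    assume "0 \<in> DD1 n"
    then obtain a where a: "a \<in> A" "1 < p1 a" "(T^^n) (o1.off a) = 0" unfolding D1_eq by auto
    obtain c where c: "c \<in> A" "p1 c = 1" using c_ex by blast
    have "p0 c \<noteq> 1" using a0_p1[OF c(1)] c by auto
    then have pc: "1 < p0 c" using o0.prange[OF c(1)] by auto
    have aI: "o0.off a \<in> II" "o0.off c \<in> II" using a c o0.off_nonneg o0.off_lt_L by auto
    have "T ((T^^n) (o0.off a)) = (T^^n) (T (o0.off a))" by (simp add: funpow_swap1)
    also have "\<dots> = 0" using T_off[OF a(1)] a by simp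
    also have "\<dots> = T (o0.off c)" using T_off[OF c(1)] o1.off_first[OF c] by simp
    finally have "(T^^n) (o0.off a) = o0.off c" using inj_onD[OF T_inj] Tn_in aI by blast
    then show False
    proof (cases n)
      case 0 then have "a = c" using o0.off_inj a c \<open>(T^^n) (o0.off a) = o0.off c\<close> by simp
      then show False using a c by simp
    next
      case (Suc m) then show False using keaD[OF a(1) c(1) pc, of n] \<open>(T^^n) (o0.off a) = o0.off c\<close> by simp
    qed
  qed
qed

end

sublocale iek \<subseteq> ied0 A p0 p1 lam
  using card2 zero_notD by unfold_locales auto

context iek
begin

lemma Tl_rend: "a \<in> A \<Longrightarrow> Tl (o0.off a + lam a) = o1.off a + lam a"
  using Tl_eq[of a "o0.off a + lam a"] o0.lpos unfolding sh_def by auto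

lemma rend_cases: assumes "a \<in> A" shows "o1.off a + lam a = L \<or> (o1.off a + lam a \<in> S1 \<and> o1.off a + lam a \<noteq> 0)"
proof (cases "p1 a = card A")
  case True then show ?thesis using o1.off_last[OF assms] by simp
next
  case False
  then have "p1 a + 1 \<le> card A" using o1.prange[OF assms] by auto
  then obtain b where b: "b \<in> A" "p1 b = p1 a + 1" using o1.psurj[of "p1 a + 1"] by auto
  then have "o1.off b = o1.off a + lam a" using o1.off_next[OF assms] by blast
  moreover have "o1.off b \<noteq> 0" using o1.off_zero_iff[OF b(1)] b o1.prange[OF assms] by simp
  ultimately show ?thesis using b by force
qed

lemma last_ne: assumes "a \<in> A" "p0 a = card A" shows "p1 a \<noteq> card A"
proof
  assume h: "p1 a = card A"
  have k: "1 \<le> card A - 1" "card A - 1 < card A" using card2 by auto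
  have "{c\<in>A. p0 c \<in> {1..card A - 1}} \<noteq> {c\<in>A. p1 c \<in> {1..card A - 1}}"
    using adm[unfolded admissible_def, rule_format, of "card A - 1"] k by simp
  moreover have "{c\<in>A. p0 c \<in> {1..card A - 1}} = A - {a}"
  proof (rule set_eqI)
    fix c show "c \<in> {c\<in>A. p0 c \<in> {1..card A - 1}} \<longleftrightarrow> c \<in> A - {a}"
    proof (cases "c \<in> A")
      case True
      have "p0 c = card A \<longleftrightarrow> c = a" using assms True o0.pinj unfolding inj_on_def by auto
      then show ?thesis using o0.prange[OF True] by auto
    qed auto
  qed
  moreover have "{c\<in>A. p1 c \<in> {1..card A - 1}} = A - {a}"
  proof (rule set_eqI)
    fix c show "c \<in> {c\<in>A. p1 c \<in> {1..card A - 1}} \<longleftrightarrow> c \<in> A - {a}"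
    proof (cases "c \<in> A")
      case True
      have "p1 c = card A \<longleftrightarrow> c = a" using assms h True o1.pinj unfolding inj_on_def by auto
      then show ?thesis using o1.prange[OF True] by auto
    qed auto
  qed
  ultimately show False by simp
qed

lemma Tl_L: "Tl L \<in> S1 \<and> Tl L \<noteq> 0"
proof -
  obtain a where a: "a \<in> A" "p0 a = card A" using o0.psurj[of "card A"] card2 by auto
  have "L = o0.off a + lam a" using o0.off_last[OF a] by simp
  then have "Tl L = o1.off a + lam a" using Tl_rend[OF a(1)] by simp
  moreover have "o1.off a + lam a \<noteq> L"
  proof
    assume "o1.off a + lam a = L"
    have "p1 a = card A"
    proof (rule ccontr)
      assume "p1 a \<noteq> card A"
      then have "p1 a + 1 \<le> card A" using o1.prange[OF a(1)] by auto
      then obtain b where b: "b \<in> A" "p1 b = p1 a + 1" using o1.psurj[of "p1 a + 1"] by auto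
      then have "o1.off b = o1.off a + lam a" using o1.off_next[OF a(1)] by blast
      then show False using o1.off_lt_L[OF b(1)] \<open>o1.off a + lam a = L\<close> by simp
    qed
    then show False using last_ne[OF a] by simp
  qed
  ultimately show ?thesis using rend_cases[OF a(1)] by auto
qed

lemma Tl_S0: assumes "v \<in> S0" "v \<noteq> 0" shows "Tl v = L \<or> (Tl v \<in> S1 \<and> Tl v \<noteq> 0)"
proof -
  obtain b where b: "b \<in> A" "v = o0.off b" using assms by auto
  have "p0 b \<noteq> 1" using b assms o0.off_first by auto
  then have "1 < p0 b" using o0.prange[OF b(1)] by auto
  moreover have "p0 b \<le> card A" using o0.prange[OF b(1)] by auto
  ultimately have "1 \<le> p0 b - 1" "p0 b - 1 \<le> card A" by auto
  then obtain b' where b': "b' \<in> A" "p0 b' = p0 b - 1" using o0.psurj[of "p0 b - 1"] by blast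
  have "p0 b = p0 b' + 1" using b' \<open>1 < p0 b\<close> by simp
  then have "o0.off b = o0.off b' + lam b'" using o0.off_next[OF b'(1) b(1)] by simp
  then have "Tl v = o1.off b' + lam b'" using Tl_rend[OF b'(1)] b by simp
  then show ?thesis using rend_cases[OF b'(1)] by auto
qed

lemma orbit_S1: assumes "w \<in> S1" "w \<noteq> 0" shows "(T^^m) w \<notin> S0"
proof
  assume H: "(T^^m) w \<in> S0"
  obtain b where b: "b \<in> A" "w = o1.off b" using assms by auto
  have zb: "o0.off b \<in> S0" using b by auto
  have "w = T (o0.off b)" using T_off b by simp
  then have e: "(T^^m) w = (T^^Suc m) (o0.off b)" by (simp add: funpow_swap1)
  show False
  proof (cases "(T^^m) w = 0")
    case False then show False using K1[OF zb H False, of "Suc m"] e by simp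
  next
    case True
    obtain c where c: "c \<in> A" "p1 c = 1" using c_ex by blast
    have "p0 c \<noteq> 1" using a0_p1[OF c(1)] c by auto
    then have c0: "o0.off c \<noteq> 0" using o0.off_zero_iff[OF c(1)] by simp
    have bI: "o0.off b \<in> II" "o0.off c \<in> II" using b c o0.off_nonneg o0.off_lt_L by auto
    have "T ((T^^m) (o0.off b)) = T (o0.off c)" using True e T_off[OF c(1)] o1.off_first[OF c] by simp
    then have ec: "(T^^m) (o0.off b) = o0.off c" using inj_onD[OF T_inj] Tn_in bI by blast
    show False
    proof (cases m)
      case 0 then have "b = c" using ec o0.off_inj b c by simp
      then show False using b c assms o1.off_first[OF c] by simp
    next
      case (Suc k) then show False using K1[OF zb _ c0, of m] ec c by auto
    qed
  qed
qed

lemma Tl_orbit_S1: assumes "w \<in> S1" "w \<noteq> 0" shows "(Tl^^m) w = (T^^m) w"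
proof (induction m)
  case 0 then show ?case by simp
next
  case (Suc m)
  have wI: "w \<in> II" using assms S1sub by auto
  have vI: "(T^^m) w \<in> II" using Tn_in[OF wI] .
  have vS: "(T^^m) w \<notin> S0" using orbit_S1[OF assms] .
  then have "(T^^m) w \<noteq> 0" using S0_0 by auto
  then have "Tl ((T^^m) w) = T ((T^^m) w)" using Tl_T[of "(T^^m) w"] vI vS by auto
  then show ?case using Suc by simp
qed

lemma Tl_dense: assumes y: "0 < y" "y \<le> L" and pq: "0 \<le> p" "p < q" "q \<le> L"
  shows "\<exists>n. (Tl^^n) y \<in> {p..<q}"
proof (cases "\<exists>n. (Tl^^n) y \<in> S0 \<or> (Tl^^n) y = L")
  case False
  then have nE: "\<And>n. (Tl^^n) y \<notin> S0 \<and> (Tl^^n) y \<noteq> L" by blast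
  have yI: "y \<in> II" using y nE[of 0] by auto
  have eq: "(Tl^^n) y = (T^^n) y" for n
  proof (induction n)
    case 0 then show ?case by simp
  next
    case (Suc n)
    have r: "0 < (Tl^^n) y \<and> (Tl^^n) y \<le> L"
    proof (induction n)
      case 0 then show ?case using y by simp
    next
      case (Suc n) then show ?case using Tl_in by simp
    qed
    then have "Tl ((Tl^^n) y) = T ((Tl^^n) y)" using Tl_T[of "(Tl^^n) y"] nE[of n] by auto
    then show ?case using Suc by simp
  qed
  obtain n where "(T^^n) y \<in> {p..<q}" using T_dense[OF yI pq] by blast
  then show ?thesis using eq by metis
next
  case True
  then obtain n0 where n0: "(Tl^^n0) y \<in> S0 \<or> (Tl^^n0) y = L" by blast
  have rng: "0 < (Tl^^n) y \<and> (Tl^^n) y \<le> L" for n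
  proof (induction n)
    case 0 then show ?case using y by simp
  next
    case (Suc n) then show ?case using Tl_in by simp
  qed
  have "\<exists>N. (Tl^^N) y \<in> S1 \<and> (Tl^^N) y \<noteq> 0"
  proof (cases "(Tl^^n0) y = L")
    case True
    then have "(Tl^^Suc n0) y = Tl L" by simp
    then show ?thesis using Tl_L by metis
  next
    case False
    then have v: "(Tl^^n0) y \<in> S0" "(Tl^^n0) y \<noteq> 0" using n0 rng[of n0] by auto
    have e1: "(Tl^^Suc n0) y = Tl ((Tl^^n0) y)" by simp
    show ?thesis
    proof (cases "Tl ((Tl^^n0) y) = L")
      case True
      then have "(Tl^^Suc (Suc n0)) y = Tl L" by simp
      then show ?thesis using Tl_L by metis
    next
      case False
      then have "Tl ((Tl^^n0) y) \<in> S1 \<and> Tl ((Tl^^n0) y) \<noteq> 0" using Tl_S0[OF v] by auto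
      then show ?thesis using e1 by metis
    qed
  qed
  then obtain N where N: "(Tl^^N) y \<in> S1" "(Tl^^N) y \<noteq> 0" by blast
  define w where "w = (Tl^^N) y"
  have wI: "w \<in> II" using N S1sub unfolding w_def by auto
  obtain m where m: "(T^^m) w \<in> {p..<q}" using T_dense[OF wI pq] by blast
  have "(Tl^^(m + N)) y = (Tl^^m) w" unfolding w_def by (simp add: funpow_add)
  also have "\<dots> = (T^^m) w" using Tl_orbit_S1 N unfolding w_def by simp
  finally show ?thesis using m by metis
qed

lemma orbit_ip: "y \<in> II \<Longrightarrow> (Th^^n) (ip y) = ip ((T^^n) y)"
proof (induction n)
  case 0 then show ?case by simp
next
  case (Suc n) then show ?case using E1 Tn_in by simp
qed

lemma orbit_im: "0 < y \<Longrightarrow> y \<le> L \<Longrightarrow> (Th^^n) (im y) = im ((Tl^^n) y)"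
proof (induction n)
  case 0 then show ?case by simp
next
  case (Suc n)
  have r: "0 < (Tl^^n) y \<and> (Tl^^n) y \<le> L"
  proof (induction n)
    case 0 then show ?case using Suc.prems by simp
  next
    case (Suc n) then show ?case using Tl_in by simp
  qed
  then show ?case using Suc E2 by simp
qed

lemma approx_gen:
  assumes Ob: "\<And>n. Ob n \<in> {im (f n), ip (f n)}"
    and dn: "\<And>p q. 0 \<le> p \<Longrightarrow> p < q \<Longrightarrow> q \<le> L \<Longrightarrow> \<exists>n. f n \<in> {p..<q}"
    and k: "k \<in> KK" and e: "\<epsilon> > 0"
  shows "\<exists>n. dist (Ob n) k < \<epsilon>"
  using K_rep[OF k]
proof cases
  case (1 z)
  obtain \<delta> where d: "\<delta> > 0" "\<forall>z'. z < z' \<longrightarrow> z' < z + \<delta> \<longrightarrow> ip z' < ip z + \<epsilon>"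
    using ip_rc[of z \<epsilon>] 1 e by auto
  define q where "q = min (z + \<delta>) L"
  have zq: "z < q" "q \<le> L" unfolding q_def using 1 d by auto
  obtain n where n: "f n \<in> {(z + q)/2..<q}" using dn[of "(z+q)/2" q] zq 1 by auto
  have "dist (Ob n) (ip z) < \<epsilon>"
    using near_right[of z "f n" "Ob n" \<epsilon>] 1 n zq Ob[of n] d unfolding q_def by auto
  then show ?thesis using 1 by auto
next
  case (2 z)
  obtain \<delta> where d: "\<delta> > 0" "\<forall>z'. z - \<delta> < z' \<longrightarrow> z' < z \<longrightarrow> 0 \<le> z' \<longrightarrow> im z - \<epsilon> < im z'"
    using im_lc[OF card1 2(2) e] by auto
  define p where "p = max 0 (z - \<delta>/2)"
  have pz: "0 \<le> p" "p < z" unfolding p_def using 2 d by auto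
  obtain n where n: "f n \<in> {p..<z}" using dn[of p z] pz 2 by auto
  have "z - \<delta> < f n" using n d unfolding p_def by auto
  then have "dist (Ob n) (im z) < \<epsilon>"
    using near_left[of "f n" z "Ob n" \<epsilon>] 2 n pz Ob[of n] d by auto
  then show ?thesis using 2 by auto
qed

lemma approx: assumes c: "c \<in> KK" and k: "k \<in> KK" and e: "\<epsilon> > 0"
  shows "\<exists>n. dist ((Th^^n) c) k < \<epsilon>"
  using K_rep[OF c]
proof cases
  case (1 y)
  show ?thesis
  proof (rule approx_gen[OF _ _ k e])
    show "(Th^^n) c \<in> {im ((T^^n) y), ip ((T^^n) y)}" for n using orbit_ip 1 by simp
    show "\<exists>n. (T^^n) y \<in> {p..<q}" if "0 \<le> p" "p < q" "q \<le> L" for p q using T_dense[OF 1(1) that] .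
  qed
next
  case (2 y)
  show ?thesis
  proof (rule approx_gen[OF _ _ k e])
    show "(Th^^n) c \<in> {im ((Tl^^n) y), ip ((Tl^^n) y)}" for n using orbit_im 2 by simp
    show "\<exists>n. (Tl^^n) y \<in> {p..<q}" if "0 \<le> p" "p < q" "q \<le> L" for p q using Tl_dense[OF 2(1,2) that] .
  qed
qed

theorem minimal: "minimal_on KK Th"
  unfolding minimal_on_def
proof (intro allI impI)
  fix C assume H: "C \<subseteq> KK \<and> closedin (top_of_set KK) C \<and> C \<noteq> {} \<and> Th ` C \<subseteq> C"
  then have CK: "C \<subseteq> KK" and cl: "closedin (top_of_set KK) C" and ne: "C \<noteq> {}" and inv: "Th ` C \<subseteq> C" by auto
  obtain c where c: "c \<in> C" using ne by auto
  have orb: "(Th^^n) c \<in> C" for n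
  proof (induction n)
    case 0 then show ?case using c by simp
  next
    case (Suc n) then show ?case using inv by auto
  qed
  obtain S where S: "closed S" "C = KK \<inter> S" using cl unfolding closedin_closed by auto
  show "C = KK"
  proof
    show "C \<subseteq> KK" by (rule CK)
    show "KK \<subseteq> C"
    proof
      fix k assume k: "k \<in> KK"
      have "k \<in> closure C"
        unfolding closure_approachable
      proof (intro allI impI)
        fix e :: real assume "e > 0"
        then obtain n where "dist ((Th^^n) c) k < e" using approx[of c k e] c CK k by auto
        then show "\<exists>x\<in>C. dist x k < e" using orb by blast
      qed
      moreover have "closure C \<subseteq> S" using S by (simp add: closure_minimal)
      ultimately show "k \<in> C" using S k by auto
    qed
  qed
qed

theorem main_loc:
  "\<exists>Th. continuous_on KK Th
            \<and> Th ` KK \<subseteq> KK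
            \<and> (\<forall>x\<in>Iint A lam. Th (ip x) = ip (T x))
            \<and> (\<forall>Th'. continuous_on KK Th'
                  \<and> Th' ` KK \<subseteq> KK
                  \<and> (\<forall>x\<in>Iint A lam. Th' (ip x) = ip (T x))
                  \<longrightarrow> (\<forall>y\<in>KK. Th' y = Th y))
            \<and> (\<exists>g. homeomorphism KK KK Th g)
            \<and> minimal_on KK Th"
proof (intro exI conjI)
  show "continuous_on KK Th" by (rule Th_cont)
  show "Th ` KK \<subseteq> KK" by (rule Th_into)
  show "\<forall>x\<in>Iint A lam. Th (ip x) = ip (T x)" unfolding Iint_def using E1 by simp
  show "\<forall>Th'. continuous_on KK Th' \<and> Th' ` KK \<subseteq> KK \<and> (\<forall>x\<in>Iint A lam. Th' (ip x) = ip (T x))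
                  \<longrightarrow> (\<forall>y\<in>KK. Th' y = Th y)"
    unfolding Iint_def using uniq by blast
  show "homeomorphism KK KK Th Th2" by (rule homeo)
  show "minimal_on KK Th" by (rule minimal)
qed

end


theorem mainTheorem5:
  fixes A :: "'a set" and p0 p1 :: "'a \<Rightarrow> nat" and lam :: "'a \<Rightarrow> real"
  assumes "ie_data A p0 p1 lam"
    and "card A \<ge> 2"
    and "admissible A p0 p1"
    and "keane A p0 p1 lam"
  shows "\<exists>Th. continuous_on (Kset A p0 p1 lam) Th
            \<and> Th ` Kset A p0 p1 lam \<subseteq> Kset A p0 p1 lam
            \<and> (\<forall>x\<in>Iint A lam. Th (iplus A p0 p1 lam x) = iplus A p0 p1 lam (iet A p0 p1 lam x))
            \<and> (\<forall>Th'. continuous_on (Kset A p0 p1 lam) Th'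
                  \<and> Th' ` Kset A p0 p1 lam \<subseteq> Kset A p0 p1 lam
                  \<and> (\<forall>x\<in>Iint A lam. Th' (iplus A p0 p1 lam x) = iplus A p0 p1 lam (iet A p0 p1 lam x))
                  \<longrightarrow> (\<forall>y\<in>Kset A p0 p1 lam. Th' y = Th y))
            \<and> (\<exists>g. homeomorphism (Kset A p0 p1 lam) (Kset A p0 p1 lam) Th g)
            \<and> minimal_on (Kset A p0 p1 lam) Th"
proof -
  have H: "iek A p0 p1 lam" unfolding iek_def iek_axioms_def ied_def using assms by auto
  show ?thesis using iek.main_loc[OF H] .
qed

end
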